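(* Let $H$ be a Hilbert space with inner product $\langle\cdot,\cdot\rangle$ and norm $\|\cdot\|$, let $A$ be a positive definite, selfadjoint linear operator on $H$ with $D(A)$ dense in $H$, and write $|v|_1=\langle Av,v\rangle^{1/2}$ for $v\in V=D(A^{1/2})$. Let $\beta\in(0,1)$, $T>0$, $u^0\in H$, and let $f:\mathbb{R}_{\geq0}\to H$ be such that $e^{-\sigma t}\|f(t)\|$ is bounded for $t\ge 0$ for some $\sigma>0$. Let $u$ be the solution of \[ D_t^\beta u(t)+Au(t)=f(t),\quad 0<t<T,\qquad u(0)=u^0. \] Then \[ \frac12\int_0^T g_{\beta,T}(t)\|u(t)\|^2\,dt+\int_0^T|u(t)|_1^2\,dt\leq \int_0^T\langle f(t),u(t)\rangle\,dt+\frac{1}{\Gamma(1-\beta)}\int_0^T t^{-\beta}\langle u^0,u(t)\rangle\,dt, \] where $g_{\beta,T}(t)=\frac{1}{\Gamma(1-\beta)}\left((T-t)^{-\beta}+t^{-\beta}\right)$.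
   Context: $D_t^\beta$ is the Caputo fractional derivative of order $\beta$: $D_t^\beta g(t)=\frac{1}{\Gamma(1-\beta)}\int_0^t (t-\tau)^{-\beta} g'(\tau)\,d\tau$. The equation is understood as an equality in $H$. *)

theory Defs
  imports "HOL-Analysis.Analysis"
begin

text \<open>Real Hilbert space: type class real_inner plus completeness.
  An (unbounded) linear operator is given by a function A together with its domain DA.\<close>

definition dense_linear_operator :: "('a::real_inner \<Rightarrow> 'a) \<Rightarrow> 'a set \<Rightarrow> bool" where
  "dense_linear_operator A DA \<longleftrightarrow>
     subspace DA \<and> closure DA = UNIV \<and>
     (\<forall>x\<in>DA. \<forall>y\<in>DA. A (x + y) = A x + A y) \<and>
     (\<forall>c. \<forall>x\<in>DA. A (c *\<^sub>R x) = c *\<^sub>R A x)"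

text \<open>Selfadjoint: A equals its adjoint A*, i.e. A is symmetric on DA and every y in the
  domain of A* (there is z with <Ax,y> = <x,z> for all x in DA) lies in DA with A y = z.\<close>
definition selfadjoint_op :: "('a::real_inner \<Rightarrow> 'a) \<Rightarrow> 'a set \<Rightarrow> bool" where
  "selfadjoint_op A DA \<longleftrightarrow>
     (\<forall>x\<in>DA. \<forall>y\<in>DA. inner (A x) y = inner x (A y)) \<and>
     (\<forall>y z. (\<forall>x\<in>DA. inner (A x) y = inner x z) \<longrightarrow> y \<in> DA \<and> A y = z)"

definition positive_definite_op :: "('a::real_inner \<Rightarrow> 'a) \<Rightarrow> 'a set \<Rightarrow> bool" where
  "positive_definite_op A DA \<longleftrightarrow> (\<forall>v\<in>DA. v \<noteq> 0 \<longrightarrow> inner (A v) v > 0)"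

definition caputo_deriv :: "real \<Rightarrow> (real \<Rightarrow> 'a::real_normed_vector) \<Rightarrow> real \<Rightarrow> 'a" where
  "caputo_deriv \<beta> u t = (1 / Gamma (1 - \<beta>)) *\<^sub>R
      integral {0..t} (\<lambda>\<tau>. (t - \<tau>) powr (- \<beta>) *\<^sub>R vector_derivative u (at \<tau>))"

definition is_solution ::
  "real \<Rightarrow> ('a::real_inner \<Rightarrow> 'a) \<Rightarrow> 'a set \<Rightarrow> (real \<Rightarrow> 'a) \<Rightarrow> 'a \<Rightarrow> real \<Rightarrow> (real \<Rightarrow> 'a) \<Rightarrow> bool" where
  "is_solution \<beta> A DA f u0 T u \<longleftrightarrow>
     continuous_on {0..T} u \<and> u 0 = u0 \<and>
     (\<forall>t\<in>{0<..<T}.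
        u differentiable (at t) \<and>
        (\<lambda>\<tau>. (t - \<tau>) powr (- \<beta>) *\<^sub>R vector_derivative u (at \<tau>)) integrable_on {0..t} \<and>
        u t \<in> DA \<and>
        caputo_deriv \<beta> u t + A (u t) = f t)"

definition g_weight :: "real \<Rightarrow> real \<Rightarrow> real \<Rightarrow> real" where
  "g_weight \<beta> T t = (1 / Gamma (1 - \<beta>)) * ((T - t) powr (- \<beta>) + t powr (- \<beta>))"

end

theory Submission
  imports Defs
begin

lemma kern_int:
  fixes b x a s :: real
  assumes b: "0 < b" "b < 1" and as: "a \<le> s" and sx: "s \<le> x"
  shows "((\<lambda>\<tau>. (x-\<tau>) powr (-b)) has_integral
          (((x-a) powr (1-b) - (x-s) powr (1-b))/(1-b))) {a..s}"
proof -
  define F where "F = (\<lambda>\<tau>::real. - ((x-\<tau>) powr (1-b)) / (1-b))"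
  have "((\<lambda>\<tau>. (x-\<tau>) powr (-b)) has_integral (F s - F a)) {a..s}"
  proof (rule fundamental_theorem_of_calculus_interior[OF as])
    show "continuous_on {a..s} F" unfolding F_def
      using b sx by (intro continuous_intros continuous_on_powr') auto
    fix y assume y: "y \<in> {a<..<s}"
    then have pos: "x - y > 0" using sx by auto
    have dd: "((\<lambda>\<tau>. (x-\<tau>) powr (1-b)) has_real_derivative (1-b) * (x-y) powr (1-b-1) * (-1)) (at y)"
    proof -
      have d: "((\<lambda>\<tau>. x - \<tau>) has_real_derivative (-1)) (at y)"
        by (auto intro!: derivative_eq_intros)
      show ?thesis using DERIV_chain2[OF has_real_derivative_powr[OF pos, of "1-b"] d] by simp
    qed
    have "(F has_real_derivative (- ((1-b) * (x-y) powr (1-b-1) * (-1)))/(1-b)) (at y)"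
      unfolding F_def by (intro DERIV_cdivide DERIV_minus dd)
    moreover have "(- ((1-b) * (x-y) powr (1-b-1) * (-1)))/(1-b) = (x-y) powr (-b)"
      using b by simp
    ultimately have "(F has_real_derivative (x-y) powr (-b)) (at y)" by simp
    then show "(F has_vector_derivative (x-y) powr (-b)) (at y)"
      by (simp add: has_real_derivative_iff_has_vector_derivative)
  qed
  moreover have "F s - F a = ((x-a) powr (1-b) - (x-s) powr (1-b))/(1-b)"
    unfolding F_def by (simp add: diff_divide_distrib)
  ultimately show ?thesis by simp
qed

lemma meas_open:
  fixes f :: "real \<Rightarrow> real"
  assumes "continuous_on {a<..<c} f"
  shows "f \<in> borel_measurable (lebesgue_on {a..c})"
proof -
  have "f \<in> borel_measurable (lebesgue_on {a<..<c})"
    by (rule continuous_imp_measurable_on_sets_lebesgue[OF assms]) auto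
  then have "f measurable_on {a<..<c}"
    by (subst measurable_on_iff_borel_measurable) auto
  then have "f measurable_on {a..c}"
  proof (rule measurable_on_spike_set)
    have "({a<..<c} - {a..c}) \<union> ({a..c} - {a<..<c}) \<subseteq> {a,c}" by auto
    then show "negligible (({a<..<c} - {a..c}) \<union> ({a..c} - {a<..<c}))"
      by (rule negligible_subset[rotated]) auto
  qed
  then show ?thesis
    by (subst measurable_on_iff_borel_measurable[symmetric]) auto
qed

lemma cont_bound:
  fixes g :: "real \<Rightarrow> 'a::real_normed_vector"
  assumes "continuous_on {a..c} g"
  obtains M where "M \<ge> 0" "\<And>x. x \<in> {a..c} \<Longrightarrow> norm (g x) \<le> M"
  using continuous_on_compact_bound[OF compact_Icc assms] by metis

lemma kint_cont:
  fixes g :: "real \<Rightarrow> real"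
  assumes b: "0 < b" "b < 1" and g: "continuous_on {a..s} g" and as: "a \<le> s" and sx: "s \<le> x"
  shows "(\<lambda>\<tau>. (x-\<tau>) powr (-b) * g \<tau>) integrable_on {a..s}"
proof -
  obtain M where M: "M \<ge> 0" "\<And>y. y \<in> {a..s} \<Longrightarrow> norm (g y) \<le> M"
    using cont_bound[OF g] by metis
  show ?thesis
  proof (rule measurable_bounded_by_integrable_imp_integrable)
    show "(\<lambda>\<tau>. (x-\<tau>) powr (-b) * g \<tau>) \<in> borel_measurable (lebesgue_on {a..s})"
      apply (rule meas_open)
      using sx by (intro continuous_intros continuous_on_subset[OF g]) auto
    show "(\<lambda>\<tau>. M * (x-\<tau>) powr (-b)) integrable_on {a..s}"
      using has_integral_mult_right[OF kern_int[OF b as sx], of M] by (auto simp: integrable_on_def)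
    fix y assume "y \<in> {a..s}"
    then show "norm ((x-y) powr (-b) * g y) \<le> M * (x-y) powr (-b)"
      using M(2)[of y] by (simp add: abs_mult mult.commute mult_right_mono)
  qed auto
qed

lemma lip_at:
  fixes \<zeta> :: "real \<Rightarrow> real"
  assumes cont: "continuous_on {a..c} \<zeta>" and t: "t \<in> {a..c}"
    and der: "(\<zeta> has_real_derivative d) (at t)"
  obtains C where "C \<ge> 0" "\<And>\<tau>. \<tau> \<in> {a..c} \<Longrightarrow> \<bar>\<zeta> \<tau> - \<zeta> t\<bar> \<le> C * \<bar>\<tau> - t\<bar>"
proof -
  obtain M where M: "M \<ge> 0" "\<And>y. y \<in> {a..c} \<Longrightarrow> norm (\<zeta> y) \<le> M"
    using cont_bound[OF cont] by metis
  have "((\<lambda>y. (\<zeta> y - \<zeta> t) / (y - t)) \<longlongrightarrow> d) (at t)"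
    using der by (simp add: has_field_derivative_iff)
  then have "\<forall>\<^sub>F y in at t. dist ((\<zeta> y - \<zeta> t) / (y - t)) d < 1"
    by (rule tendstoD) simp
  then obtain \<delta> where \<delta>: "\<delta> > 0" and
    H0: "\<forall>y. y \<noteq> t \<and> dist y t < \<delta> \<longrightarrow> dist ((\<zeta> y - \<zeta> t) / (y - t)) d < 1"
    by (auto simp: eventually_at)
  have H: "\<And>y. y \<noteq> t \<Longrightarrow> dist y t < \<delta> \<Longrightarrow> dist ((\<zeta> y - \<zeta> t) / (y - t)) d < 1"
    using H0 by blast
  define C where "C = \<bar>d\<bar> + 1 + 2*M/\<delta>"
  have C0: "C \<ge> 0" unfolding C_def using M \<delta> by auto
  have "\<bar>\<zeta> y - \<zeta> t\<bar> \<le> C * \<bar>y - t\<bar>" if y: "y \<in> {a..c}" for y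
  proof (cases "y = t")
    case True then show ?thesis by simp
  next
    case False
    show ?thesis
    proof (cases "\<bar>y - t\<bar> < \<delta>")
      case True
      then have "\<bar>(\<zeta> y - \<zeta> t) / (y - t) - d\<bar> < 1" using H[OF False] by (simp add: dist_real_def)
      then have "\<bar>(\<zeta> y - \<zeta> t) / (y - t)\<bar> \<le> \<bar>d\<bar> + 1" by linarith
      then have "\<bar>\<zeta> y - \<zeta> t\<bar> \<le> (\<bar>d\<bar> + 1) * \<bar>y - t\<bar>"
        using False by (simp add: abs_divide divide_le_eq)
      also have "\<dots> \<le> C * \<bar>y - t\<bar>" unfolding C_def using M \<delta> by (intro mult_right_mono) auto
      finally show ?thesis .
    next
      case False
      have "\<bar>\<zeta> y - \<zeta> t\<bar> \<le> 2*M" using M(2)[OF y] M(2)[OF t] by auto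
      also have "2*M = (2*M/\<delta>) * \<delta>" using \<delta> by simp
      also have "\<dots> \<le> (2*M/\<delta>) * \<bar>y - t\<bar>" using False M \<delta> by (intro mult_left_mono) auto
      also have "\<dots> \<le> C * \<bar>y - t\<bar>" unfolding C_def by (intro mult_right_mono) auto
      finally show ?thesis .
    qed
  qed
  then show ?thesis using that C0 by blast
qed

lemma powr_m1_mult:
  fixes r b :: real
  assumes "r > 0"
  shows "r powr (-b-1) * r = r powr (-b)"
proof -
  have "r powr 1 = r" using assms by simp
  then have "r powr (-b-1) * r = r powr (-b-1) * r powr 1" by simp
  also have "\<dots> = r powr (-b-1+1)" by (rule powr_add[symmetric])
  also have "\<dots> = r powr (-b)" by simp
  finally show ?thesis .
qed

lemma march_int:
  fixes \<zeta> :: "real \<Rightarrow> real"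
  assumes b: "0 < b" "b < 1" and t: "0 \<le> t" and cont: "continuous_on {0..t} \<zeta>"
    and C: "C \<ge> 0" "\<And>\<tau>. \<tau> \<in> {0..t} \<Longrightarrow> \<bar>\<zeta> \<tau> - \<zeta> t\<bar> \<le> C * \<bar>\<tau> - t\<bar>"
  shows "(\<lambda>\<tau>. b * (t-\<tau>) powr (-b-1) * (\<zeta> t - \<zeta> \<tau>)) integrable_on {0..t}"
    and "\<And>\<tau>. \<tau> \<in> {0..t} \<Longrightarrow> \<bar>b * (t-\<tau>) powr (-b-1) * (\<zeta> t - \<zeta> \<tau>)\<bar> \<le> b * C * (t-\<tau>) powr (-b)"
proof -
  show bnd: "\<bar>b * (t-\<tau>) powr (-b-1) * (\<zeta> t - \<zeta> \<tau>)\<bar> \<le> b * C * (t-\<tau>) powr (-b)"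
    if \<tau>: "\<tau> \<in> {0..t}" for \<tau>
  proof (cases "\<tau> = t")
    case True then show ?thesis by simp
  next
    case False
    then have pos: "t - \<tau> > 0" using \<tau> by auto
    have "\<bar>b * (t-\<tau>) powr (-b-1) * (\<zeta> t - \<zeta> \<tau>)\<bar> = b * (t-\<tau>) powr (-b-1) * \<bar>\<zeta> \<tau> - \<zeta> t\<bar>"
      using b by (simp add: abs_mult abs_minus_commute)
    also have "\<dots> \<le> b * (t-\<tau>) powr (-b-1) * (C * (t - \<tau>))"
      using C(2)[OF \<tau>] \<tau> b by (intro mult_left_mono) auto
    also have "\<dots> = b * C * ((t-\<tau>) powr (-b-1) * (t-\<tau>))" by (simp add: algebra_simps)
    also have "\<dots> = b * C * (t-\<tau>) powr (-b)" using powr_m1_mult[OF pos] by simp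
    finally show ?thesis .
  qed
  show "(\<lambda>\<tau>. b * (t-\<tau>) powr (-b-1) * (\<zeta> t - \<zeta> \<tau>)) integrable_on {0..t}"
  proof (rule measurable_bounded_by_integrable_imp_integrable)
    show "(\<lambda>\<tau>. b * (t-\<tau>) powr (-b-1) * (\<zeta> t - \<zeta> \<tau>)) \<in> borel_measurable (lebesgue_on {0..t})"
      by (rule meas_open) (intro continuous_intros continuous_on_subset[OF cont], auto)
    show "(\<lambda>\<tau>. b * C * (t-\<tau>) powr (-b)) integrable_on {0..t}"
      using has_integral_mult_right[OF kern_int[OF b t order_refl], of "b*C"] by (auto simp: integrable_on_def)
  qed (use bnd in auto)
qed

lemma powr_deriv_sub:
  fixes t y e :: real
  assumes "y < t"
  shows "((\<lambda>\<tau>. (t-\<tau>) powr e) has_real_derivative (- (e * (t-y) powr (e-1)))) (at y)"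
proof -
  have pos: "t - y > 0" using assms by simp
  have d: "((\<lambda>\<tau>. t - \<tau>) has_real_derivative (-1)) (at y)"
    by (auto intro!: derivative_eq_intros)
  show ?thesis using DERIV_chain2[OF has_real_derivative_powr[OF pos, of e] d] by simp
qed

lemma tendsto_left_indef:
  fixes f :: "real \<Rightarrow> real"
  assumes "f integrable_on {0..t}" "0 < t"
  shows "((\<lambda>s. integral {0..s} f) \<longlongrightarrow> integral {0..t} f) (at_left t)"
proof -
  have "continuous_on {0..t} (\<lambda>x. integral {0..x} f)"
    by (rule indefinite_integral_continuous_1[OF assms(1)])
  then have "((\<lambda>s. integral {0..s} f) \<longlongrightarrow> integral {0..t} f) (at t within {0..t})"
    using assms(2) by (auto simp: continuous_on_def)
  then show ?thesis using at_within_Icc_at_left[of 0 t] assms(2) by simp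
qed

lemma caputo_marchaud:
  fixes \<zeta> \<zeta>' :: "real \<Rightarrow> real"
  assumes b: "0 < b" "b < 1" and t: "0 < t" and cont: "continuous_on {0..t} \<zeta>"
    and der: "\<And>\<tau>. \<tau> \<in> {0<..t} \<Longrightarrow> (\<zeta> has_real_derivative \<zeta>' \<tau>) (at \<tau>)"
    and int: "(\<lambda>\<tau>. (t-\<tau>) powr (-b) * \<zeta>' \<tau>) integrable_on {0..t}"
  shows "integral {0..t} (\<lambda>\<tau>. (t-\<tau>) powr (-b) * \<zeta>' \<tau>) =
           t powr (-b) * (\<zeta> t - \<zeta> 0) + integral {0..t} (\<lambda>\<tau>. b * (t-\<tau>) powr (-b-1) * (\<zeta> t - \<zeta> \<tau>))"
    and "(\<lambda>\<tau>. b * (t-\<tau>) powr (-b-1) * (\<zeta> t - \<zeta> \<tau>)) integrable_on {0..t}"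
proof -
  obtain C where C: "C \<ge> 0" "\<And>\<tau>. \<tau> \<in> {0..t} \<Longrightarrow> \<bar>\<zeta> \<tau> - \<zeta> t\<bar> \<le> C * \<bar>\<tau> - t\<bar>"
    using lip_at[OF cont _ der[of t]] t by auto
  define Mf where "Mf = (\<lambda>\<tau>. b * (t-\<tau>) powr (-b-1) * (\<zeta> t - \<zeta> \<tau>))"
  define Cf where "Cf = (\<lambda>\<tau>. (t-\<tau>) powr (-b) * \<zeta>' \<tau>)"
  define F where "F = (\<lambda>\<tau>. (t-\<tau>) powr (-b) * (\<zeta> \<tau> - \<zeta> t))"
  have Mint: "Mf integrable_on {0..t}" unfolding Mf_def
    using march_int(1)[OF b _ cont C] t by auto
  then show "(\<lambda>\<tau>. b * (t-\<tau>) powr (-b-1) * (\<zeta> t - \<zeta> \<tau>)) integrable_on {0..t}"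
    unfolding Mf_def .
  have Cint: "Cf integrable_on {0..t}" unfolding Cf_def by (rule int)
  have key: "integral {0..s} Cf = F s + t powr (-b) * (\<zeta> t - \<zeta> 0) + integral {0..s} Mf"
    if s: "s \<in> {0<..<t}" for s
  proof -
    have "((\<lambda>\<tau>. Cf \<tau> - Mf \<tau>) has_integral (F s - F 0)) {0..s}"
    proof (rule fundamental_theorem_of_calculus_interior)
      show "0 \<le> s" using s by auto
      show "continuous_on {0..s} F" unfolding F_def using s
        by (intro continuous_intros continuous_on_powr' continuous_on_subset[OF cont]) auto
      fix y assume y: "y \<in> {0<..<s}"
      then have yt: "y < t" "y \<in> {0<..t}" using s by auto
      have dz: "((\<lambda>\<tau>. \<zeta> \<tau> - \<zeta> t) has_real_derivative \<zeta>' y) (at y)"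
        using der[OF yt(2)] by (auto intro!: derivative_eq_intros)
      have "(F has_real_derivative
              (- ((-b) * (t-y) powr (-b-1))) * (\<zeta> y - \<zeta> t) + \<zeta>' y * (t-y) powr (-b)) (at y)"
        unfolding F_def using DERIV_mult[OF powr_deriv_sub[OF yt(1), of "-b"] dz] by simp
      moreover have "(- ((-b) * (t-y) powr (-b-1))) * (\<zeta> y - \<zeta> t) + \<zeta>' y * (t-y) powr (-b)
                     = Cf y - Mf y"
        unfolding Cf_def Mf_def by (simp add: algebra_simps)
      ultimately show "(F has_vector_derivative Cf y - Mf y) (at y)"
        by (simp add: has_real_derivative_iff_has_vector_derivative)
    qed
    moreover have "Cf integrable_on {0..s}" "Mf integrable_on {0..s}"
      using integrable_on_subinterval[OF Cint] integrable_on_subinterval[OF Mint] s by auto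
    ultimately have "integral {0..s} Cf - integral {0..s} Mf = F s - F 0"
      using integral_diff[of Cf "{0..s}" Mf] integral_unique by metis
    moreover have "F 0 = - (t powr (-b) * (\<zeta> t - \<zeta> 0))" unfolding F_def by (simp add: algebra_simps)
    ultimately show ?thesis by simp
  qed
  have F0: "(F \<longlongrightarrow> 0) (at_left t)"
  proof (rule Lim_null_comparison)
    show "\<forall>\<^sub>F s in at_left t. norm (F s) \<le> C * (t - s) powr (1-b)"
      using eventually_at_left_real[OF t]
    proof (rule eventually_mono)
      fix s assume s: "s \<in> {0<..<t}"
      then have pos: "t - s > 0" by simp
      have "norm (F s) = (t-s) powr (-b) * \<bar>\<zeta> s - \<zeta> t\<bar>" unfolding F_def by (simp add: abs_mult)
      also have "\<dots> \<le> (t-s) powr (-b) * (C * (t - s))"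
        using C(2)[of s] s by (intro mult_left_mono) auto
      also have "\<dots> = C * ((t-s) powr (-b-1+1) * (t-s))"
        by simp
      also have "(t-s) powr (-b-1+1) * (t-s) = (t-s) powr (1-b)"
      proof -
        have "(t-s) powr (-b) * (t-s) powr 1 = (t-s) powr (-b+1)" by (rule powr_add[symmetric])
        then show ?thesis using pos by simp
      qed
      finally show "norm (F s) \<le> C * (t - s) powr (1-b)" .
    qed
    have "((\<lambda>s. (t - s) powr (1-b)) \<longlongrightarrow> 0) (at_left t)"
    proof (rule tendsto_zero_powrI[where b="1-b"])
      have "((\<lambda>s. t - s) \<longlongrightarrow> t - t) (at_left t)" by (intro tendsto_intros)
      then show "((\<lambda>s. t - s) \<longlongrightarrow> 0) (at_left t)" by simp
      show "\<forall>\<^sub>F x in at_left t. 0 \<le> t - x"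
        using eventually_at_left_real[OF t] by eventually_elim auto
    qed (use b in auto)
    then show "((\<lambda>s. C * (t - s) powr (1-b)) \<longlongrightarrow> 0) (at_left t)"
      using tendsto_mult_right_zero by blast
  qed
  have lim1: "((\<lambda>s. integral {0..s} Cf) \<longlongrightarrow> integral {0..t} Cf) (at_left t)"
    by (rule tendsto_left_indef[OF Cint t])
  have "((\<lambda>s. F s + t powr (-b) * (\<zeta> t - \<zeta> 0) + integral {0..s} Mf) \<longlongrightarrow>
          0 + t powr (-b) * (\<zeta> t - \<zeta> 0) + integral {0..t} Mf) (at_left t)"
    by (intro tendsto_intros F0 tendsto_left_indef[OF Mint t])
  moreover have "\<forall>\<^sub>F s in at_left t. F s + t powr (-b) * (\<zeta> t - \<zeta> 0) + integral {0..s} Mf = integral {0..s} Cf"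
    using eventually_at_left_real[OF t] by eventually_elim (use key in auto)
  ultimately have "((\<lambda>s. integral {0..s} Cf) \<longlongrightarrow>
          0 + t powr (-b) * (\<zeta> t - \<zeta> 0) + integral {0..t} Mf) (at_left t)"
    by (rule Lim_transform_eventually)
  then have lim2: "((\<lambda>s. integral {0..s} Cf) \<longlongrightarrow>
          t powr (-b) * (\<zeta> t - \<zeta> 0) + integral {0..t} Mf) (at_left t)" by simp
  have "integral {0..t} Cf = t powr (-b) * (\<zeta> t - \<zeta> 0) + integral {0..t} Mf"
    using tendsto_unique[OF _ lim1 lim2] by (simp add: trivial_limit_at_left_real)
  then show "integral {0..t} (\<lambda>\<tau>. (t-\<tau>) powr (-b) * \<zeta>' \<tau>) =
           t powr (-b) * (\<zeta> t - \<zeta> 0) + integral {0..t} (\<lambda>\<tau>. b * (t-\<tau>) powr (-b-1) * (\<zeta> t - \<zeta> \<tau>))"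
    unfolding Cf_def Mf_def .
qed

lemma kdiff:
  fixes b r h :: real
  assumes b: "0 < b" and r: "0 < r" and h: "0 < h"
  shows "0 \<le> r powr (-b) - (r+h) powr (-b)" "r powr (-b) - (r+h) powr (-b) \<le> h * b * r powr (-b-1)"
proof -
  have "\<exists>z>r. z < r+h \<and> (r+h) powr (-b) - r powr (-b) = (r + h - r) * ((-b) * z powr (-b-1))"
  proof (rule MVT2)
    show "r < r + h" using h by simp
    fix x assume "r \<le> x" "x \<le> r + h"
    then have "x > 0" using r by simp
    then show "((\<lambda>x. x powr (-b)) has_real_derivative (-b) * x powr (-b-1)) (at x)"
      using has_real_derivative_powr[of x "-b"] by simp
  qed
  then obtain z where z: "z > r" "z < r+h" "(r+h) powr (-b) - r powr (-b) = h * ((-b) * z powr (-b-1))"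
    by auto
  then have eq: "r powr (-b) - (r+h) powr (-b) = h * b * z powr (-b-1)" by (simp add: algebra_simps)
  show "0 \<le> r powr (-b) - (r+h) powr (-b)" unfolding eq using h b by simp
  have "z powr (-b-1) \<le> r powr (-b-1)" using z r b by (intro powr_mono2') auto
  then show "r powr (-b) - (r+h) powr (-b) \<le> h * b * r powr (-b-1)"
    unfolding eq using h b by (intro mult_left_mono) auto
qed

lemma kbound:
  fixes \<rho> :: "real \<Rightarrow> real"
  assumes b: "0 < b" "b < 1" and ac: "a \<le> c" and cx: "c \<le> x" and cont: "continuous_on {a..c} \<rho>"
    and B: "\<And>\<tau>. \<tau> \<in> {a..c} \<Longrightarrow> \<bar>\<rho> \<tau>\<bar> \<le> B"
  shows "\<bar>integral {a..c} (\<lambda>\<tau>. (x-\<tau>) powr (-b) * \<rho> \<tau>)\<bar> \<le> B * (((x-a) powr (1-b) - (x-c) powr (1-b))/(1-b))"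
proof -
  have "norm (integral {a..c} (\<lambda>\<tau>. (x-\<tau>) powr (-b) * \<rho> \<tau>)) \<le> integral {a..c} (\<lambda>\<tau>. B * (x-\<tau>) powr (-b))"
  proof (rule Henstock_Kurzweil_Integration.integral_norm_bound_integral)
    show "(\<lambda>\<tau>. (x-\<tau>) powr (-b) * \<rho> \<tau>) integrable_on {a..c}" by (rule kint_cont[OF b cont ac cx])
    show "(\<lambda>\<tau>. B * (x-\<tau>) powr (-b)) integrable_on {a..c}"
      using has_integral_mult_right[OF kern_int[OF b ac cx], of B] by (auto simp: integrable_on_def)
    fix \<tau> assume "\<tau> \<in> {a..c}"
    then show "norm ((x-\<tau>) powr (-b) * \<rho> \<tau>) \<le> B * (x-\<tau>) powr (-b)"
      using B[of \<tau>] by (simp add: abs_mult mult.commute mult_right_mono)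
  qed
  also have "integral {a..c} (\<lambda>\<tau>. B * (x-\<tau>) powr (-b)) = B * (((x-a) powr (1-b) - (x-c) powr (1-b))/(1-b))"
    using has_integral_mult_right[OF kern_int[OF b ac cx], of B] by (rule integral_unique)
  finally show ?thesis by simp
qed

lemma J_holder:
  fixes g :: "real \<Rightarrow> real"
  assumes b: "0 < b" "b < 1" and cont: "continuous_on {0..S} g"
    and M: "\<And>\<tau>. \<tau> \<in> {0..S} \<Longrightarrow> \<bar>g \<tau>\<bar> \<le> M"
    and xy: "0 \<le> x" "x \<le> y" "y \<le> S"
  shows "\<bar>integral {0..y} (\<lambda>\<tau>. (y-\<tau>) powr (-b) * g \<tau>) - integral {0..x} (\<lambda>\<tau>. (x-\<tau>) powr (-b) * g \<tau>)\<bar>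
           \<le> 2 * M * (y - x) powr (1-b) / (1-b)"
proof -
  have M0: "M \<ge> 0" using M[of 0] xy by auto
  have gy: "continuous_on {0..y} g" "continuous_on {0..x} g" "continuous_on {x..y} g"
    using xy by (auto intro: continuous_on_subset[OF cont])
  have iy: "(\<lambda>\<tau>. (y-\<tau>) powr (-b) * g \<tau>) integrable_on {0..y}"
    using kint_cont[OF b gy(1)] xy by auto
  have split: "integral {0..y} (\<lambda>\<tau>. (y-\<tau>) powr (-b) * g \<tau>) =
      integral {0..x} (\<lambda>\<tau>. (y-\<tau>) powr (-b) * g \<tau>) + integral {x..y} (\<lambda>\<tau>. (y-\<tau>) powr (-b) * g \<tau>)"
    using Henstock_Kurzweil_Integration.integral_combine[OF xy(1,2) iy] by simp
  have A: "\<bar>integral {x..y} (\<lambda>\<tau>. (y-\<tau>) powr (-b) * g \<tau>)\<bar> \<le> M * (y - x) powr (1-b) / (1-b)"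
    using kbound[OF b xy(2) order_refl gy(3), of M] M xy by auto
  have i1: "(\<lambda>\<tau>. (y-\<tau>) powr (-b) * g \<tau>) integrable_on {0..x}"
    using kint_cont[OF b gy(2)] xy by auto
  have i2: "(\<lambda>\<tau>. (x-\<tau>) powr (-b) * g \<tau>) integrable_on {0..x}"
    using kint_cont[OF b gy(2)] xy by auto
  have "\<bar>integral {0..x} (\<lambda>\<tau>. (y-\<tau>) powr (-b) * g \<tau>) - integral {0..x} (\<lambda>\<tau>. (x-\<tau>) powr (-b) * g \<tau>)\<bar>
        = norm (integral {0..x} (\<lambda>\<tau>. (y-\<tau>) powr (-b) * g \<tau> - (x-\<tau>) powr (-b) * g \<tau>))"
    using integral_diff[OF i1 i2] by simp
  also have "\<dots> \<le> integral {0..x} (\<lambda>\<tau>. M * \<bar>(x-\<tau>) powr (-b) - (y-\<tau>) powr (-b)\<bar>)"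
  proof (rule Henstock_Kurzweil_Integration.integral_norm_bound_integral)
    show "(\<lambda>\<tau>. (y-\<tau>) powr (-b) * g \<tau> - (x-\<tau>) powr (-b) * g \<tau>) integrable_on {0..x}"
      using integrable_diff[OF i1 i2] .
    have kx: "(\<lambda>\<tau>. (x-\<tau>) powr (-b)) integrable_on {0..x}" "(\<lambda>\<tau>. (y-\<tau>) powr (-b)) integrable_on {0..x}"
      using kern_int[OF b order_refl xy(1)] kern_int[OF b xy(1)] xy by (auto simp: integrable_on_def)
    have "(\<lambda>\<tau>. M * ((x-\<tau>) powr (-b) - (y-\<tau>) powr (-b))) integrable_on {0..x}"
      using integrable_diff[OF kx] by (rule integrable_on_mult_right)
    then show "(\<lambda>\<tau>. M * \<bar>(x-\<tau>) powr (-b) - (y-\<tau>) powr (-b)\<bar>) integrable_on {0..x}"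
    proof (rule integrable_spike[where S="{x}"])
      fix \<tau> assume "\<tau> \<in> {0..x} - {x}"
      then have "(y-\<tau>) powr (-b) \<le> (x-\<tau>) powr (-b)" using xy b by (intro powr_mono2') auto
      then show "M * \<bar>(x-\<tau>) powr (-b) - (y-\<tau>) powr (-b)\<bar> = M * ((x-\<tau>) powr (-b) - (y-\<tau>) powr (-b))"
        by simp
    qed auto
    fix \<tau> assume "\<tau> \<in> {0..x}"
    then show "norm ((y-\<tau>) powr (-b) * g \<tau> - (x-\<tau>) powr (-b) * g \<tau>) \<le> M * \<bar>(x-\<tau>) powr (-b) - (y-\<tau>) powr (-b)\<bar>"
    proof -
      have "(y-\<tau>) powr (-b) * g \<tau> - (x-\<tau>) powr (-b) * g \<tau> = - (g \<tau> * ((x-\<tau>) powr (-b) - (y-\<tau>) powr (-b)))"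
        by (simp add: algebra_simps)
      then have "norm ((y-\<tau>) powr (-b) * g \<tau> - (x-\<tau>) powr (-b) * g \<tau>) = \<bar>g \<tau>\<bar> * \<bar>(x-\<tau>) powr (-b) - (y-\<tau>) powr (-b)\<bar>"
        by (simp add: abs_mult)
      also have "\<dots> \<le> M * \<bar>(x-\<tau>) powr (-b) - (y-\<tau>) powr (-b)\<bar>"
        using M[of \<tau>] \<open>\<tau> \<in> {0..x}\<close> xy by (intro mult_right_mono) auto
      finally show ?thesis .
    qed
  qed
  also have "\<dots> = integral {0..x} (\<lambda>\<tau>. M * ((x-\<tau>) powr (-b) - (y-\<tau>) powr (-b)))"
  proof (rule integral_spike[where S="{x}"])
    fix \<tau> assume "\<tau> \<in> {0..x} - {x}"
    then have "(y-\<tau>) powr (-b) \<le> (x-\<tau>) powr (-b)" using xy b by (intro powr_mono2') auto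
    then show "M * ((x-\<tau>) powr (-b) - (y-\<tau>) powr (-b)) = M * \<bar>(x-\<tau>) powr (-b) - (y-\<tau>) powr (-b)\<bar>"
      by simp
  qed auto
  also have "\<dots> = M * ((x powr (1-b) - 0 powr (1-b))/(1-b) - (y powr (1-b) - (y-x) powr (1-b))/(1-b))"
  proof -
    have "((\<lambda>\<tau>. (x-\<tau>) powr (-b) - (y-\<tau>) powr (-b)) has_integral
           ((x-0) powr (1-b) - (x-x) powr (1-b))/(1-b) - ((y-0) powr (1-b) - (y-x) powr (1-b))/(1-b)) {0..x}"
      by (intro has_integral_diff kern_int) (use b xy in auto)
    note eq = integral_unique[OF has_integral_mult_right[OF this, of M]]
    show ?thesis unfolding eq by simp
  qed
  also have "\<dots> \<le> M * (y - x) powr (1-b) / (1-b)"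
  proof -
    have "x powr (1-b) \<le> y powr (1-b)" using xy b by (intro powr_mono2) auto
    then have "(x powr (1-b) - 0 powr (1-b))/(1-b) - (y powr (1-b) - (y-x) powr (1-b))/(1-b) \<le> (y - x) powr (1-b) / (1-b)"
      using b by (simp add: diff_divide_distrib divide_right_mono)
    then show ?thesis using M0 by (simp add: mult_left_mono times_divide_eq_right[symmetric] del: times_divide_eq_right)
  qed
  finally have B: "\<bar>integral {0..x} (\<lambda>\<tau>. (y-\<tau>) powr (-b) * g \<tau>) - integral {0..x} (\<lambda>\<tau>. (x-\<tau>) powr (-b) * g \<tau>)\<bar>
      \<le> M * (y - x) powr (1-b) / (1-b)" .
  show ?thesis unfolding split using A B by linarith
qed

lemma powr_half_bound:
  fixes r b :: real
  assumes r: "r > 0" and b: "0 < b" "b < 1" and rs: "r \<le> 2 * w" and w: "w > 0"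
  shows "w powr (-b-1) * r \<le> 4 * r powr (-b)"
proof -
  have "w powr (-b-1) * r \<le> w powr (-b-1) * (2*w)" using rs by (intro mult_left_mono) auto
  also have "\<dots> = 2 * (w powr (-b-1) * w)" by simp
  also have "w powr (-b-1) * w = w powr (-b)" by (rule powr_m1_mult[OF w])
  also have "w powr (-b) \<le> (r/2) powr (-b)" using rs r b by (intro powr_mono2') auto
  also have "(r/2) powr (-b) = r powr (-b) * 2 powr b"
    by (simp add: powr_divide powr_minus_divide)
  also have "2 powr b \<le> 2 powr (1::real)" using b by (intro powr_mono) auto
  then have "r powr (-b) * 2 powr b \<le> r powr (-b) * 2" by (intro mult_left_mono) auto
  finally show ?thesis by simp
qed

lemma rl_deriv:
  fixes \<phi> :: "real \<Rightarrow> real"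
  assumes b: "0 < b" "b < 1" and t: "0 < t" "t < T" and cont: "continuous_on {0..T} \<phi>"
    and der: "(\<phi> has_real_derivative d) (at t)"
  shows "((\<lambda>x. integral {0..x} (\<lambda>\<tau>. (x-\<tau>) powr (-b) * \<phi> \<tau>)) has_real_derivative
          (t powr (-b) * \<phi> t + integral {0..t} (\<lambda>\<tau>. b * (t-\<tau>) powr (-b-1) * (\<phi> t - \<phi> \<tau>)))) (at t)"
proof -
  obtain C where C: "C \<ge> 0" "\<And>\<tau>. \<tau> \<in> {0..T} \<Longrightarrow> \<bar>\<phi> \<tau> - \<phi> t\<bar> \<le> C * \<bar>\<tau> - t\<bar>"
    using lip_at[OF cont _ der] t by auto
  define \<rho> where "\<rho> = (\<lambda>\<tau>. \<phi> \<tau> - \<phi> t)"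
  have \<rho>t: "\<rho> t = 0" unfolding \<rho>_def by simp
  have \<rho>cont: "continuous_on {0..T} \<rho>" unfolding \<rho>_def by (intro continuous_intros cont)
  have \<rho>C: "\<And>\<tau>. \<tau> \<in> {0..T} \<Longrightarrow> \<bar>\<rho> \<tau>\<bar> \<le> C * \<bar>\<tau> - t\<bar>" unfolding \<rho>_def using C by auto
  define Jr where "Jr = (\<lambda>x. integral {0..x} (\<lambda>\<tau>. (x-\<tau>) powr (-b) * \<rho> \<tau>))"
  define Lf where "Lf = (\<lambda>\<tau>. b * (t-\<tau>) powr (-b-1) * (\<phi> t - \<phi> \<tau>))"
  define G where "G = (\<lambda>\<tau>. 4*b*C*(t-\<tau>) powr (-b))"
  define \<delta> where "\<delta> = min t (T-t) / 3"
  have \<delta>: "\<delta> > 0" "\<delta> \<le> t/3" "\<delta> \<le> (T-t)/3" using t unfolding \<delta>_def by auto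
  define e where "e = (\<lambda>h::real. t - 2 * max 0 (-h))"
  define q where "q = (\<lambda>h \<tau>. ((t+h-\<tau>) powr (-b) - (t-\<tau>) powr (-b)) / h * \<rho> \<tau>)"
  define D where "D = (\<lambda>h \<tau>. if \<tau> \<in> {0..e h} then q h \<tau> else 0)"
  have G0: "G \<tau> \<ge> 0" for \<tau> unfolding G_def using b C by auto
  have Gint: "G integrable_on {0..s}" if "0 \<le> s" "s \<le> t" for s
    using has_integral_mult_right[OF kern_int[OF b that], of "4*b*C"] unfolding G_def
    by (auto simp: integrable_on_def)
  have ep: "t/3 \<le> e h" "e h \<le> t" "h > 0 \<Longrightarrow> e h = t" "h < 0 \<Longrightarrow> e h = t + 2*h" if "\<bar>h\<bar> < \<delta>" for h
    using that \<delta> unfolding e_def by auto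
  have qbound: "\<bar>q h \<tau>\<bar> \<le> G \<tau>" if h: "h \<noteq> 0" "\<bar>h\<bar> < \<delta>" and \<tau>: "\<tau> \<in> {0..e h}" for h \<tau>
  proof (cases "\<tau> = t")
    case True
    then show ?thesis unfolding q_def using \<rho>t G0 by simp
  next
    case False
    define r where "r = t - \<tau>"
    have r: "r > 0" using False \<tau> ep[OF h(2)] unfolding r_def by auto
    have \<tau>T: "\<tau> \<in> {0..T}" using \<tau> ep[OF h(2)] t by auto
    have "\<bar>\<tau> - t\<bar> = r" using r unfolding r_def by auto
    then have \<rho>r: "\<bar>\<rho> \<tau>\<bar> \<le> C * r" using \<rho>C[OF \<tau>T] by simp
    show ?thesis
    proof (cases "h > 0")
      case True
      have kd: "r powr (-b) - (r+h) powr (-b) \<le> h * b * r powr (-b-1)" "0 \<le> r powr (-b) - (r+h) powr (-b)"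
        using kdiff[OF b(1) r True] by auto
      have eq: "\<bar>q h \<tau>\<bar> = (r powr (-b) - (r+h) powr (-b)) / h * \<bar>\<rho> \<tau>\<bar>"
      proof -
        have "q h \<tau> = - ((r powr (-b) - (r+h) powr (-b)) / h * \<rho> \<tau>)"
          unfolding q_def r_def by (simp add: algebra_simps minus_divide_left)
        then show ?thesis using kd(2) True by (simp add: abs_mult abs_divide)
      qed
      have "\<bar>q h \<tau>\<bar> \<le> (h * b * r powr (-b-1)) / h * (C * r)"
        unfolding eq using kd True \<rho>r b by (intro mult_mono divide_right_mono) auto
      also have "\<dots> = b * C * (r powr (-b-1) * r)" using True by simp
      also have "\<dots> = b * C * r powr (-b)" using powr_m1_mult[OF r] by simp
      also have "\<dots> \<le> G \<tau>" unfolding G_def r_def using b C by (intro mult_right_mono) auto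
      finally show ?thesis .
    next
      case False
      then have hneg: "h < 0" using h by auto
      define w where "w = -h"
      have w: "w > 0" using hneg w_def by auto
      have rs: "r \<ge> 2*w" using \<tau> ep(4)[OF h(2) hneg] unfolding r_def w_def by auto
      have rs0: "r - w > 0" using rs w by auto
      have kd: "(r-w) powr (-b) - (r-w+w) powr (-b) \<le> w * b * (r-w) powr (-b-1)"
               "0 \<le> (r-w) powr (-b) - (r-w+w) powr (-b)"
        using kdiff[OF b(1) rs0 w] by auto
      have eq: "\<bar>q h \<tau>\<bar> = ((r-w) powr (-b) - r powr (-b)) / w * \<bar>\<rho> \<tau>\<bar>"
      proof -
        have "q h \<tau> = - (((r-w) powr (-b) - r powr (-b)) / w * \<rho> \<tau>)"
          unfolding q_def r_def w_def by (simp add: algebra_simps)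
        then show ?thesis using kd(2) w by (simp add: abs_mult abs_divide)
      qed
      have "\<bar>q h \<tau>\<bar> \<le> (w * b * (r-w) powr (-b-1)) / w * (C * r)"
        unfolding eq using kd w \<rho>r b by (intro mult_mono divide_right_mono) auto
      also have "\<dots> = b * C * ((r-w) powr (-b-1) * r)" using w by simp
      also have "\<dots> \<le> b * C * (4 * r powr (-b))"
        using powr_half_bound[OF r b _ rs0] rs b C by (intro mult_left_mono) auto
      also have "\<dots> = G \<tau>" unfolding G_def r_def by simp
      finally show ?thesis .
    qed
  qed
  have Dbound: "norm (D h \<tau>) \<le> G \<tau>" if h: "h \<noteq> 0" "\<bar>h\<bar> < \<delta>" and \<tau>: "\<tau> \<in> {0..t}" for h \<tau>
    unfolding D_def using qbound[OF h] G0 by auto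
  have qint: "q h integrable_on {0..e h}" if h: "h \<noteq> 0" "\<bar>h\<bar> < \<delta>" for h
  proof (rule measurable_bounded_by_integrable_imp_integrable)
    show "q h \<in> borel_measurable (lebesgue_on {0..e h})"
    proof (rule meas_open)
      have pos: "0 < t + h - \<tau>" "0 < t - \<tau>" if "\<tau> \<in> {0<..<e h}" for \<tau>
        using that ep[OF h(2)] h unfolding e_def by (auto split: if_splits)
      show "continuous_on {0<..<e h} (q h)" unfolding q_def
        using pos ep[OF h(2)] t h(1)
        by (intro continuous_intros continuous_on_powr' continuous_on_subset[OF \<rho>cont]) auto
    qed
    show "G integrable_on {0..e h}" using Gint ep[OF h(2)] t by auto
  qed (use qbound[OF h] in auto)
  have Dint: "(D h has_integral integral {0..e h} (q h)) {0..t}" if h: "h \<noteq> 0" "\<bar>h\<bar> < \<delta>" for h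
  proof -
    have "((\<lambda>\<tau>. if \<tau> \<in> cbox 0 (e h) then q h \<tau> else 0) has_integral integral {0..e h} (q h)) (cbox 0 t)"
      by (rule has_integral_restrict_closed_subinterval) (use qint[OF h] ep[OF h(2)] t in auto)
    then show ?thesis unfolding D_def by simp
  qed
  have \<rho>sub: "continuous_on {a..c} \<rho>" if "0 \<le> a" "c \<le> T" for a c
    using continuous_on_subset[OF \<rho>cont] that by auto
  have krint: "(\<lambda>\<tau>. (x-\<tau>) powr (-b) * \<rho> \<tau>) integrable_on {a..c}" if "0 \<le> a" "a \<le> c" "c \<le> x" "c \<le> T" for a c x
    using kint_cont[OF b \<rho>sub[OF that(1,4)] that(2,3)] .
  have decomp: "\<bar>(Jr (t+h) - Jr t)/h - integral {0..e h} (q h)\<bar> \<le> 8*C/(1-b) * \<bar>h\<bar> powr (1-b)"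
    if h: "h \<noteq> 0" "\<bar>h\<bar> < \<delta>" for h
  proof -
    have qeq: "q h = (\<lambda>\<tau>. ((t+h-\<tau>) powr (-b) * \<rho> \<tau> - (t-\<tau>) powr (-b) * \<rho> \<tau>) / h)"
      unfolding q_def by (auto simp: algebra_simps)
    have ht: "t + h < T" "0 < t + h" using h \<delta> by auto
    have intq: "integral {0..e h} (q h) =
        (integral {0..e h} (\<lambda>\<tau>. (t+h-\<tau>) powr (-b) * \<rho> \<tau>) - integral {0..e h} (\<lambda>\<tau>. (t-\<tau>) powr (-b) * \<rho> \<tau>)) / h"
    proof -
      have e: "0 \<le> e h" "e h \<le> t" "e h \<le> t + h" using ep[OF h(2)] t h unfolding e_def by auto
      show ?thesis unfolding qeq integral_divide
        by (subst integral_diff) (use krint e ht t in auto)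
    qed
    have ekr: "\<bar>\<rho> \<tau>\<bar> \<le> C * B" if "\<tau> \<in> {a..c}" "t - B \<le> a" "c \<le> t + B" "0 \<le> a" "c \<le> T" for \<tau> a c B
    proof -
      have "\<bar>\<rho> \<tau>\<bar> \<le> C * \<bar>\<tau> - t\<bar>" using \<rho>C[of \<tau>] that by auto
      also have "\<dots> \<le> C * B" using that C by (intro mult_left_mono) auto
      finally show ?thesis .
    qed
    show ?thesis
    proof (cases "h > 0")
      case True
      have eh: "e h = t" using ep(3)[OF h(2) True] .
      define I0 where "I0 = integral {0..t} (\<lambda>\<tau>. (t+h-\<tau>) powr (-b) * \<rho> \<tau>)"
      define I1 where "I1 = integral {t..t+h} (\<lambda>\<tau>. (t+h-\<tau>) powr (-b) * \<rho> \<tau>)"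
      have "Jr (t+h) = I0 + I1" unfolding Jr_def I0_def I1_def
        by (rule Henstock_Kurzweil_Integration.integral_combine[symmetric]) (use t True ht krint in auto)
      moreover have "integral {0..e h} (q h) = (I0 - Jr t) / h"
        using intq unfolding eh I0_def Jr_def .
      ultimately have "(Jr (t+h) - Jr t)/h - integral {0..e h} (q h) = I1 / h"
        using True by (simp add: field_simps)
      moreover have "\<bar>I1\<bar> \<le> (C*h) * (((t+h-t) powr (1-b) - (t+h-(t+h)) powr (1-b))/(1-b))"
        unfolding I1_def
        by (rule kbound[OF b _ _ \<rho>sub]) (use True t ht ekr[of _ t "t+h" h] in auto)
      ultimately have "\<bar>(Jr (t+h) - Jr t)/h - integral {0..e h} (q h)\<bar> \<le> C * h powr (1-b) / (1-b)"
        using True by (simp add: abs_divide divide_le_eq mult_ac)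
      also have "\<dots> \<le> 8*C/(1-b) * \<bar>h\<bar> powr (1-b)"
        using True C b by (simp add: divide_right_mono mult_right_mono)
      finally show ?thesis .
    next
      case False
      then have hneg: "h < 0" using h by auto
      define w where "w = -h"
      have w: "w > 0" "t + h = t - w" using hneg w_def by auto
      have eh: "e h = t - 2*w" using ep(4)[OF h(2) hneg] w_def by simp
      have wt: "3*w < t" "t - 2*w \<ge> 0" using h \<delta> w_def by auto
      define A0 where "A0 = integral {0..t-2*w} (\<lambda>\<tau>. (t-\<tau>) powr (-b) * \<rho> \<tau>)"
      define A1 where "A1 = integral {t-2*w..t} (\<lambda>\<tau>. (t-\<tau>) powr (-b) * \<rho> \<tau>)"
      define B0 where "B0 = integral {0..t-2*w} (\<lambda>\<tau>. (t-w-\<tau>) powr (-b) * \<rho> \<tau>)"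
      define B1 where "B1 = integral {t-2*w..t-w} (\<lambda>\<tau>. (t-w-\<tau>) powr (-b) * \<rho> \<tau>)"
      have JA: "Jr t = A0 + A1" unfolding Jr_def A0_def A1_def
        by (rule Henstock_Kurzweil_Integration.integral_combine[symmetric]) (use t w wt krint in auto)
      have JB: "Jr (t+h) = B0 + B1" unfolding Jr_def B0_def B1_def w(2)
        by (rule Henstock_Kurzweil_Integration.integral_combine[symmetric]) (use t w wt krint in auto)
      have "integral {0..e h} (q h) = (B0 - A0) / h"
        using intq unfolding eh w(2) A0_def B0_def .
      moreover have "(B0 + B1 - (A0 + A1))/h - (B0 - A0)/h = (A1 - B1) / w"
      proof -
        have "(B0 + B1 - (A0 + A1))/h - (B0 - A0)/h = (B1 - A1)/h" by (simp add: diff_divide_distrib add_divide_distrib)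
        also have "\<dots> = (A1 - B1) / w" using hneg unfolding w_def by (simp add: field_simps)
        finally show ?thesis .
      qed
      ultimately have "(Jr (t+h) - Jr t)/h - integral {0..e h} (q h) = (A1 - B1) / w"
        unfolding JA JB by simp
      moreover have B1b: "\<bar>B1\<bar> \<le> (C*(2*w)) * (((t-w-(t-2*w)) powr (1-b) - (t-w-(t-w)) powr (1-b))/(1-b))"
        unfolding B1_def
        by (rule kbound[OF b _ _ \<rho>sub]) (use w wt t ekr[of _ "t-2*w" "t-w" "2*w"] in auto)
      moreover have A1b: "\<bar>A1\<bar> \<le> (C*(2*w)) * (((t-(t-2*w)) powr (1-b) - (t-t) powr (1-b))/(1-b))"
        unfolding A1_def
        by (rule kbound[OF b _ _ \<rho>sub]) (use w wt t ekr[of _ "t-2*w" "t" "2*w"] in auto)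
      moreover have "(2*w) powr (1-b) \<le> 2 * w powr (1-b)"
      proof -
        have "(2*w) powr (1-b) = 2 powr (1-b) * w powr (1-b)" using w by (simp add: powr_mult)
        also have "2 powr (1-b) \<le> 2 powr (1::real)" using b by (intro powr_mono) auto
        then have "2 powr (1-b) * w powr (1-b) \<le> 2 * w powr (1-b)" by (intro mult_right_mono) auto
        finally show ?thesis .
      qed
      ultimately have X: "\<bar>(Jr (t+h) - Jr t)/h - integral {0..e h} (q h)\<bar> = \<bar>A1 - B1\<bar> / w"
        and B1': "\<bar>B1\<bar> \<le> (C*(2*w)) * (w powr (1-b) / (1-b))"
        and A1': "\<bar>A1\<bar> \<le> (C*(2*w)) * ((2*w) powr (1-b) / (1-b))"
        and p2: "(2*w) powr (1-b) \<le> 2 * w powr (1-b)"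
        using w by (auto simp: abs_divide)
      have A1'': "\<bar>A1\<bar> \<le> (C*(2*w)) * (2 * w powr (1-b) / (1-b))"
        using A1' order.trans mult_left_mono[OF divide_right_mono[OF p2, of "1-b"], of "C*(2*w)"] b C w by auto
      have "\<bar>(Jr (t+h) - Jr t)/h - integral {0..e h} (q h)\<bar> \<le>
          (C*(2*w) * (w powr (1-b) / (1-b)) + C*(2*w) * (2 * w powr (1-b) / (1-b))) / w"
        unfolding X using w A1'' B1' by (intro divide_right_mono) auto
      also have "\<dots> = 6 * C * w powr (1-b) / (1-b)"
      proof -
        have gen: "\<And>P K. K \<noteq> 0 \<Longrightarrow> (C*(2*w)*(P/K) + C*(2*w)*(2*P/K))/w = 6*C*P/K"
          using w by (simp add: field_simps)
        show ?thesis using gen[of "1-b" "w powr (1-b)"] b by simp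
      qed
      also have "\<dots> \<le> 8*C/(1-b) * \<bar>h\<bar> powr (1-b)"
        using w w_def C b by (simp add: divide_right_mono mult_right_mono)
      finally show ?thesis .
    qed
  qed
  have Lint: "Lf integrable_on {0..t}" unfolding Lf_def
  proof (rule march_int(1)[OF b _ continuous_on_subset[OF cont] C(1)])
    fix \<tau> assume "\<tau> \<in> {0..t}"
    then show "\<bar>\<phi> \<tau> - \<phi> t\<bar> \<le> C * \<bar>\<tau> - t\<bar>" using C(2)[of \<tau>] t by auto
  qed (use t in auto)
  have main: "((\<lambda>h. (Jr (t+h) - Jr t)/h) \<longlongrightarrow> integral {0..t} Lf) (at 0)"
  proof -
    have "((\<lambda>h. (Jr (t+h) - Jr t)/h) \<longlongrightarrow> integral {0..t} Lf) (at 0 within ball 0 \<delta>)"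
    proof (subst tendsto_at_iff_sequentially, intro allI impI)
      fix X :: "nat \<Rightarrow> real" assume X: "\<forall>i. X i \<in> ball 0 \<delta> - {0}" and X0: "X \<longlonglongrightarrow> 0"
      have Xh: "X i \<noteq> 0" "\<bar>X i\<bar> < \<delta>" for i using X by (auto simp: dist_real_def)
      have conv: "(\<lambda>k. D (X k) \<tau>) \<longlonglongrightarrow> Lf \<tau>" if \<tau>: "\<tau> \<in> {0..t}" for \<tau>
      proof (cases "\<tau> = t")
        case True
        have "D (X k) \<tau> = 0" for k unfolding D_def q_def True \<rho>t by simp
        moreover have "Lf \<tau> = 0" unfolding Lf_def True by simp
        ultimately show ?thesis by simp
      next
        case False
        define r where "r = t - \<tau>"
        have r: "r > 0" using False \<tau> unfolding r_def by auto
        have "((\<lambda>z. z powr (-b)) has_real_derivative (-b) * r powr (-b-1)) (at r)"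
          using has_real_derivative_powr[OF r, of "-b"] by simp
        then have dq: "((\<lambda>h. ((r+h) powr (-b) - r powr (-b)) / h) \<longlongrightarrow> (-b) * r powr (-b-1)) (at 0)"
          by (simp add: DERIV_def)
        have fX: "filterlim X (at 0) sequentially"
          by (rule filterlim_atI[OF X0]) (use Xh in auto)
        have "((\<lambda>k. ((r + X k) powr (-b) - r powr (-b)) / X k * \<rho> \<tau>) \<longlongrightarrow> (-b) * r powr (-b-1) * \<rho> \<tau>) sequentially"
          by (intro tendsto_intros filterlim_compose[OF dq fX])
        moreover have "\<forall>\<^sub>F k in sequentially. ((r + X k) powr (-b) - r powr (-b)) / X k * \<rho> \<tau> = D (X k) \<tau>"
        proof -
          have "\<forall>\<^sub>F k in sequentially. dist (X k) 0 < r/2" using tendstoD[OF X0, of "r/2"] r by simp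
          then show ?thesis
          proof eventually_elim
            case (elim k)
            then have "\<tau> \<in> {0..e (X k)}" using \<tau> unfolding e_def r_def by (auto simp: dist_real_def)
            then show ?case unfolding D_def q_def r_def by (simp add: algebra_simps)
          qed
        qed
        ultimately have "(\<lambda>k. D (X k) \<tau>) \<longlonglongrightarrow> (-b) * r powr (-b-1) * \<rho> \<tau>"
          by (rule Lim_transform_eventually)
        moreover have "(-b) * r powr (-b-1) * \<rho> \<tau> = Lf \<tau>" unfolding Lf_def r_def \<rho>_def by (simp add: algebra_simps)
        ultimately show ?thesis by simp
      qed
      have dc: "(\<lambda>k. integral {0..t} (D (X k))) \<longlonglongrightarrow> integral {0..t} Lf"
      proof (rule dominated_convergence(2))
        show "D (X k) integrable_on {0..t}" for k using Dint[OF Xh(1,2)] by (auto simp: integrable_on_def)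
        show "G integrable_on {0..t}" using Gint t by auto
        show "norm (D (X k) \<tau>) \<le> G \<tau>" if "\<tau> \<in> {0..t}" for k \<tau> using Dbound[OF Xh(1,2) that] .
        show "(\<lambda>k. D (X k) \<tau>) \<longlonglongrightarrow> Lf \<tau>" if "\<tau> \<in> {0..t}" for \<tau> using conv[OF that] .
      qed
      have rem: "(\<lambda>k. (Jr (t + X k) - Jr t)/X k - integral {0..t} (D (X k))) \<longlonglongrightarrow> 0"
      proof (rule Lim_null_comparison)
        show "\<forall>\<^sub>F k in sequentially. norm ((Jr (t + X k) - Jr t)/X k - integral {0..t} (D (X k)))
               \<le> 8*C/(1-b) * \<bar>X k\<bar> powr (1-b)"
          using decomp[OF Xh(1,2)] integral_unique[OF Dint[OF Xh(1,2)]] by (auto intro!: always_eventually)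
        have "(\<lambda>k. \<bar>X k\<bar> powr (1-b)) \<longlonglongrightarrow> 0"
          by (rule tendsto_zero_powrI[where b="1-b"]) (use b tendsto_rabs_zero[OF X0] in auto)
        then show "(\<lambda>k. 8*C/(1-b) * \<bar>X k\<bar> powr (1-b)) \<longlonglongrightarrow> 0"
          using tendsto_mult_right_zero by blast
      qed
      have "(\<lambda>k. ((Jr (t + X k) - Jr t)/X k - integral {0..t} (D (X k))) + integral {0..t} (D (X k)))
              \<longlonglongrightarrow> 0 + integral {0..t} Lf"
        by (rule tendsto_add[OF rem dc])
      then show "((\<lambda>h. (Jr (t+h) - Jr t)/h) \<circ> X) \<longlonglongrightarrow> integral {0..t} Lf" by (simp add: o_def)
    qed
    moreover have eqat: "at (0::real) within ball 0 \<delta> = at 0" by (rule at_within_open) (use \<delta> in auto)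
    ultimately show ?thesis by simp
  qed
  then have dJr: "(Jr has_real_derivative integral {0..t} Lf) (at t)" by (simp add: DERIV_def)
  have dpow: "((\<lambda>x. \<phi> t * (x powr (1-b) / (1-b))) has_real_derivative \<phi> t * t powr (-b)) (at t)"
  proof -
    have "((\<lambda>x. x powr (1-b)) has_real_derivative (1-b) * t powr (1-b-1)) (at t)"
      by (rule has_real_derivative_powr[OF t(1)])
    from DERIV_cmult[OF DERIV_cdivide[OF this, of "1-b"], of "\<phi> t"] show ?thesis using b by simp
  qed
  have Jeq: "integral {0..x} (\<lambda>\<tau>. (x-\<tau>) powr (-b) * \<phi> \<tau>) = \<phi> t * (x powr (1-b) / (1-b)) + Jr x"
    if x: "x \<in> {0<..<T}" for x
  proof -
    have k: "((\<lambda>\<tau>. (x-\<tau>) powr (-b)) has_integral ((x-0) powr (1-b) - (x-x) powr (1-b))/(1-b)) {0..x}"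
      by (rule kern_int) (use b x in auto)
    have "integral {0..x} (\<lambda>\<tau>. (x-\<tau>) powr (-b) * \<phi> \<tau>) =
          integral {0..x} (\<lambda>\<tau>. \<phi> t * (x-\<tau>) powr (-b) + (x-\<tau>) powr (-b) * \<rho> \<tau>)"
      unfolding \<rho>_def by (rule integral_cong) (simp add: algebra_simps)
    also have "\<dots> = \<phi> t * integral {0..x} (\<lambda>\<tau>. (x-\<tau>) powr (-b)) + Jr x"
      unfolding Jr_def
      by (subst integral_add) (use krint[of 0 x x] x k integrable_on_mult_right[of _ "{0..x}" "\<phi> t"] in \<open>auto simp: integrable_on_def\<close>)
    also have "integral {0..x} (\<lambda>\<tau>. (x-\<tau>) powr (-b)) = x powr (1-b) / (1-b)"
      using integral_unique[OF k] by simp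
    finally show ?thesis .
  qed
  have "((\<lambda>x. \<phi> t * (x powr (1-b) / (1-b)) + Jr x) has_real_derivative
         \<phi> t * t powr (-b) + integral {0..t} Lf) (at t)"
    by (rule DERIV_add[OF dpow dJr])
  moreover have "\<forall>\<^sub>F x in nhds t. \<phi> t * (x powr (1-b) / (1-b)) + Jr x = integral {0..x} (\<lambda>\<tau>. (x-\<tau>) powr (-b) * \<phi> \<tau>)"
    using eventually_nhds_in_open[of "{0<..<T}" t] t Jeq by (auto elim!: eventually_mono)
  ultimately show ?thesis unfolding Lf_def
    by (subst (asm) DERIV_cong_ev[OF refl _ refl]) (auto simp: mult.commute)
qed

lemma inner_deriv:
  fixes v w :: "real \<Rightarrow> 'a::real_inner"
  assumes "(v has_vector_derivative v') (at t)" "(w has_vector_derivative w') (at t)"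
  shows "((\<lambda>\<tau>. inner (v \<tau>) (w \<tau>)) has_real_derivative inner v' (w t) + inner (v t) w') (at t)"
proof -
  have "((\<lambda>\<tau>. inner (v \<tau>) (w \<tau>)) has_derivative (\<lambda>h. inner (v t) (h *\<^sub>R w') + inner (h *\<^sub>R v') (w t))) (at t)"
    using has_derivative_inner[OF assms[unfolded has_vector_derivative_def]] by simp
  then show ?thesis unfolding has_field_derivative_def
    by (rule has_derivative_eq_rhs) (auto simp: algebra_simps fun_eq_iff)
qed

lemma J_holder_sym:
  fixes g :: "real \<Rightarrow> real"
  assumes b: "0 < b" "b < 1" and cont: "continuous_on {0..S} g"
    and M: "\<And>\<tau>. \<tau> \<in> {0..S} \<Longrightarrow> \<bar>g \<tau>\<bar> \<le> M"
    and xy: "x \<in> {0..S}" "y \<in> {0..S}"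
  shows "\<bar>integral {0..y} (\<lambda>\<tau>. (y-\<tau>) powr (-b) * g \<tau>) - integral {0..x} (\<lambda>\<tau>. (x-\<tau>) powr (-b) * g \<tau>)\<bar>
           \<le> 2 * M * \<bar>y - x\<bar> powr (1-b) / (1-b)"
proof (cases "x \<le> y")
  case True
  then show ?thesis using J_holder[OF b cont M, of x y] xy by auto
next
  case False
  then show ?thesis using J_holder[OF b cont M, of y x] xy by (auto simp: abs_minus_commute)
qed

lemma tendsto_powr_dist:
  fixes b t0 :: real and F
  assumes "0 < b" "b < 1"
  shows "((\<lambda>t. K * \<bar>t - t0\<bar> powr (1-b)) \<longlongrightarrow> 0) (at t0 within S)"
proof -
  have "((\<lambda>t. t - t0) \<longlongrightarrow> t0 - t0) (at t0 within S)" by (intro tendsto_intros)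
  then have "((\<lambda>t. \<bar>t - t0\<bar>) \<longlongrightarrow> 0) (at t0 within S)" using tendsto_rabs_zero by force
  then have "((\<lambda>t. \<bar>t - t0\<bar> powr (1-b)) \<longlongrightarrow> 0) (at t0 within S)"
    by (rule tendsto_zero_powrI[where b="1-b"]) (use assms in auto)
  then show ?thesis using tendsto_mult_right_zero by blast
qed

lemma J_cont:
  fixes g :: "real \<Rightarrow> real"
  assumes b: "0 < b" "b < 1" and cont: "continuous_on {0..S} g"
  shows "continuous_on {0..S} (\<lambda>x. integral {0..x} (\<lambda>\<tau>. (x-\<tau>) powr (-b) * g \<tau>))"
proof -
  obtain M where M: "M \<ge> 0" "\<And>y. y \<in> {0..S} \<Longrightarrow> norm (g y) \<le> M"
    using cont_bound[OF cont] by metis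
  let ?J = "\<lambda>x. integral {0..x} (\<lambda>\<tau>. (x-\<tau>) powr (-b) * g \<tau>)"
  show ?thesis unfolding continuous_on_def
  proof
    fix t0 assume t0: "t0 \<in> {0..S}"
    have "((\<lambda>t. ?J t - ?J t0) \<longlongrightarrow> 0) (at t0 within {0..S})"
    proof (rule Lim_null_comparison)
      show "\<forall>\<^sub>F t in at t0 within {0..S}. norm (?J t - ?J t0) \<le> 2 * M / (1-b) * \<bar>t - t0\<bar> powr (1-b)"
        using J_holder_sym[OF b cont, of M t0] M t0
        by (auto simp: eventually_at_filter intro!: always_eventually)
      show "((\<lambda>t. 2 * M / (1-b) * \<bar>t - t0\<bar> powr (1-b)) \<longlongrightarrow> 0) (at t0 within {0..S})"
        by (rule tendsto_powr_dist[OF b])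
    qed
    then show "(?J \<longlongrightarrow> ?J t0) (at t0 within {0..S})" by (rule LIM_zero_cancel)
  qed
qed

lemma B_cont:
  fixes v w :: "real \<Rightarrow> 'a::real_inner"
  assumes b: "0 < b" "b < 1" and cv: "continuous_on {0..S} v" and cw: "continuous_on {0..T} w"
    and e: "0 \<le> e" "T + e \<le> S"
  shows "continuous_on {0..T} (\<lambda>t. integral {0..t+e} (\<lambda>\<tau>. (t+e-\<tau>) powr (-b) * inner (v \<tau>) (w t)))"
proof -
  obtain Mv where Mv: "Mv \<ge> 0" "\<And>y. y \<in> {0..S} \<Longrightarrow> norm (v y) \<le> Mv"
    using cont_bound[OF cv] by metis
  obtain Mw where Mw: "Mw \<ge> 0" "\<And>y. y \<in> {0..T} \<Longrightarrow> norm (w y) \<le> Mw"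
    using cont_bound[OF cw] by metis
  define B where "B = (\<lambda>x t. integral {0..x} (\<lambda>\<tau>. (x-\<tau>) powr (-b) * inner (v \<tau>) (w t)))"
  have gc: "continuous_on {0..S} (\<lambda>\<tau>. inner (v \<tau>) z)" for z by (intro continuous_intros cv)
  have gb: "\<bar>inner (v \<tau>) (w t)\<bar> \<le> Mv * Mw" if "\<tau> \<in> {0..S}" "t \<in> {0..T}" for \<tau> t
    using Cauchy_Schwarz_ineq2[of "v \<tau>" "w t"] Mv(2)[OF that(1)] Mw(2)[OF that(2)] Mv(1) Mw(1)
    by (meson mult_mono norm_ge_zero order_trans)
  show ?thesis unfolding continuous_on_def
  proof
    fix t0 assume t0: "t0 \<in> {0..T}"
    have lim0: "((\<lambda>t. B (t+e) t - B (t0+e) t0) \<longlongrightarrow> 0) (at t0 within {0..T})"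
    proof (rule Lim_null_comparison)
      show "\<forall>\<^sub>F t in at t0 within {0..T}. norm (B (t+e) t - B (t0+e) t0) \<le>
              2 * (Mv*Mw) / (1-b) * \<bar>t - t0\<bar> powr (1-b) + Mv * S powr (1-b) / (1-b) * norm (w t - w t0)"
        unfolding eventually_at_filter
      proof (rule always_eventually, intro allI impI)
        fix t assume "t \<noteq> t0" and t: "t \<in> {0..T}"
        have A: "\<bar>B (t+e) t - B (t0+e) t\<bar> \<le> 2 * (Mv*Mw) * \<bar>(t+e) - (t0+e)\<bar> powr (1-b) / (1-b)"
          unfolding B_def by (rule J_holder_sym[OF b gc]) (use gb t t0 e in auto)
        have i1: "(\<lambda>\<tau>. (t0+e-\<tau>) powr (-b) * inner (v \<tau>) z) integrable_on {0..t0+e}" for z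
          using kint_cont[OF b continuous_on_subset[OF gc[of z]], of 0 "t0+e" "t0+e"] t0 e by auto
        have "B (t0+e) t - B (t0+e) t0 = integral {0..t0+e} (\<lambda>\<tau>. (t0+e-\<tau>) powr (-b) * inner (v \<tau>) (w t - w t0))"
          unfolding B_def by (subst integral_diff[OF i1 i1, symmetric]) (simp add: inner_diff_right algebra_simps)
        also have "\<bar>\<dots>\<bar> \<le> (Mv * norm (w t - w t0)) * (((t0+e-0) powr (1-b) - (t0+e-(t0+e)) powr (1-b))/(1-b))"
        proof (rule kbound[OF b])
          show "continuous_on {0..t0+e} (\<lambda>\<tau>. inner (v \<tau>) (w t - w t0))"
            by (rule continuous_on_subset[OF gc]) (use t0 e in auto)
          fix \<tau> assume "\<tau> \<in> {0..t0+e}"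
          then have "norm (v \<tau>) \<le> Mv" using Mv(2)[of \<tau>] t0 e by auto
          then show "\<bar>inner (v \<tau>) (w t - w t0)\<bar> \<le> Mv * norm (w t - w t0)"
            using Cauchy_Schwarz_ineq2[of "v \<tau>" "w t - w t0"] by (meson mult_right_mono norm_ge_zero order_trans)
        qed (use t0 e in auto)
        also have "\<dots> \<le> Mv * S powr (1-b) / (1-b) * norm (w t - w t0)"
        proof -
          have "(t0+e) powr (1-b) \<le> S powr (1-b)" using t0 e b by (intro powr_mono2) auto
          then have "Mv * (norm (w t - w t0) * (t0 + e) powr (1 - b)) \<le> Mv * (S powr (1 - b) * norm (w t - w t0))"
            using Mv by (intro mult_left_mono) (auto simp: mult.commute[of "norm (w t - w t0)"] intro: mult_right_mono)
          then have "Mv * (norm (w t - w t0) * (t0 + e) powr (1 - b)) / (1 - b) \<le> Mv * (S powr (1 - b) * norm (w t - w t0)) / (1 - b)"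
            using b by (intro divide_right_mono) auto
          then show ?thesis by (simp add: mult_ac)
        qed
        finally have Bb: "\<bar>B (t0+e) t - B (t0+e) t0\<bar> \<le> Mv * S powr (1-b) / (1-b) * norm (w t - w t0)" .
        have "norm (B (t+e) t - B (t0+e) t0) \<le> \<bar>B (t+e) t - B (t0+e) t\<bar> + \<bar>B (t0+e) t - B (t0+e) t0\<bar>"
          by simp
        also have "\<dots> \<le> 2 * (Mv*Mw) / (1-b) * \<bar>t - t0\<bar> powr (1-b) + Mv * S powr (1-b) / (1-b) * norm (w t - w t0)"
          using A Bb by simp
        finally show "norm (B (t+e) t - B (t0+e) t0) \<le> 2 * (Mv*Mw) / (1-b) * \<bar>t - t0\<bar> powr (1-b) + Mv * S powr (1-b) / (1-b) * norm (w t - w t0)" .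
      qed
      have "(w \<longlongrightarrow> w t0) (at t0 within {0..T})" using cw t0 by (auto simp: continuous_on_def)
      then have "((\<lambda>t. norm (w t - w t0)) \<longlongrightarrow> 0) (at t0 within {0..T})"
        using LIM_zero tendsto_norm_zero by blast
      then have lw: "((\<lambda>t. Mv * S powr (1-b) / (1-b) * norm (w t - w t0)) \<longlongrightarrow> 0) (at t0 within {0..T})"
        using tendsto_mult_right_zero by blast
      then show "((\<lambda>t. 2 * (Mv*Mw) / (1-b) * \<bar>t - t0\<bar> powr (1-b) + Mv * S powr (1-b) / (1-b) * norm (w t - w t0)) \<longlongrightarrow> 0)
                  (at t0 within {0..T})"
        using tendsto_add[OF tendsto_powr_dist[OF b, of "2 * (Mv*Mw) / (1-b)" t0 "{0..T}"] lw] by simp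
    qed
    then have "((\<lambda>t. B (t+e) t) \<longlongrightarrow> B (t0+e) t0) (at t0 within {0..T})" by (rule LIM_zero_cancel)
    then show "((\<lambda>t. integral {0..t+e} (\<lambda>\<tau>. (t+e-\<tau>) powr (-b) * inner (v \<tau>) (w t))) \<longlongrightarrow>
                integral {0..t0+e} (\<lambda>\<tau>. (t0+e-\<tau>) powr (-b) * inner (v \<tau>) (w t0))) (at t0 within {0..T})"
      unfolding B_def .
  qed
qed

lemma meas_A:
  fixes A :: "'a::real_inner \<Rightarrow> 'a" and u :: "real \<Rightarrow> 'a"
  assumes dense: "closure DA = UNIV" and sym: "\<forall>x\<in>DA. \<forall>y\<in>DA. inner (A x) y = inner x (A y)"
    and cu: "continuous_on {0..T} u" and uD: "\<And>t. t \<in> {0<..<T} \<Longrightarrow> u t \<in> DA"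
  shows "(\<lambda>t. inner (A (u t)) (u t)) measurable_on {0..T}"
proof -
  define N where "N = (\<lambda>n::nat. real (Suc n))"
  have N: "N n > 0" for n unfolding N_def by simp
  define X where "X = (\<lambda>n k. SOME x. x \<in> DA \<and> dist x (u (real k / N n)) < 1 / N n)"
  have X: "X n k \<in> DA \<and> dist (X n k) (u (real k / N n)) < 1 / N n" for n k
  proof -
    have "u (real k / N n) \<in> closure DA" using dense by simp
    then have "\<exists>x\<in>DA. dist x (u (real k / N n)) < 1 / N n"
      using N[of n] by (auto simp: closure_approachable)
    then have "\<exists>x. x \<in> DA \<and> dist x (u (real k / N n)) < 1 / N n" by blast
    then show ?thesis unfolding X_def by (rule someI_ex)
  qed
  define an where "an = (\<lambda>n t. inner (u t) (A (X n (nat \<lfloor>N n * t\<rfloor>))))"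
  have meas: "an n measurable_on {0..T}" for n
  proof -
    have f: "(\<lambda>t. inner (u t) (A (X n k))) \<in> borel_measurable (lebesgue_on {0..T})" if "k \<in> UNIV" for k
      by (rule continuous_imp_measurable_on_sets_lebesgue) (auto intro!: continuous_intros cu)
    have m1: "(\<lambda>t. N n * t) \<in> borel_measurable (lebesgue_on {0..T})"
      by (rule continuous_imp_measurable_on_sets_lebesgue) (auto intro!: continuous_intros)
    have m2: "(\<lambda>t. nat \<lfloor>N n * t\<rfloor>) = nat \<circ> (floor \<circ> (\<lambda>t. N n * t))" by (simp add: o_def)
    have m3: "(nat :: int \<Rightarrow> nat) \<in> measurable (count_space UNIV) (count_space UNIV)" by simp
    have g: "(\<lambda>t. nat \<lfloor>N n * t\<rfloor>) \<in> measurable (lebesgue_on {0..T}) (count_space UNIV)"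
      unfolding m2 by (rule measurable_comp[OF measurable_comp[OF m1 measurable_real_floor] m3])
    have "an n \<in> borel_measurable (lebesgue_on {0..T})" unfolding an_def
      using measurable_compose_countable'[where f="\<lambda>k t. inner (u t) (A (X n k))", OF f g] by simp
    then show ?thesis by (subst measurable_on_iff_borel_measurable) auto
  qed
  have conv: "(\<lambda>n. an n t) \<longlonglongrightarrow> inner (A (u t)) (u t)" if t: "t \<in> {0..T} - {0,T}" for t
  proof -
    have t': "t \<in> {0<..<T}" using t by auto
    define s where "s = (\<lambda>n. real (nat \<lfloor>N n * t\<rfloor>) / N n)"
    have s: "s n \<in> {0..T}" "\<bar>s n - t\<bar> \<le> 1 / N n" for n
    proof -
      have f0: "\<lfloor>N n * t\<rfloor> \<ge> 0" using N[of n] t' by auto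
      have "real_of_int \<lfloor>N n * t\<rfloor> \<le> N n * t" "N n * t < real_of_int \<lfloor>N n * t\<rfloor> + 1" by linarith+
      then have "s n \<le> t" "t < s n + 1 / N n" "s n \<ge> 0" unfolding s_def using f0 N[of n]
        by (auto simp: field_simps)
      then show "s n \<in> {0..T}" "\<bar>s n - t\<bar> \<le> 1 / N n" using t' by auto
    qed
    have iN: "(\<lambda>n. 1 / N n) \<longlonglongrightarrow> 0" unfolding N_def
      using LIMSEQ_inverse_real_of_nat by (simp add: inverse_eq_divide)
    have st: "s \<longlonglongrightarrow> t"
    proof (rule LIM_zero_cancel, rule Lim_null_comparison)
      show "\<forall>\<^sub>F n in sequentially. norm (s n - t) \<le> 1 / N n" using s(2) by auto
    qed (rule iN)
    have us: "(\<lambda>n. u (s n)) \<longlonglongrightarrow> u t"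
      by (rule continuous_on_tendsto_compose[OF cu st]) (use t' s(1) in auto)
    have Xt: "(\<lambda>n. X n (nat \<lfloor>N n * t\<rfloor>)) \<longlonglongrightarrow> u t"
    proof (rule LIM_zero_cancel, rule Lim_null_comparison)
      show "\<forall>\<^sub>F n in sequentially. norm (X n (nat \<lfloor>N n * t\<rfloor>) - u t) \<le> 1 / N n + norm (u (s n) - u t)"
      proof (rule always_eventually, rule allI)
        fix n
        have "norm (X n (nat \<lfloor>N n * t\<rfloor>) - u t) \<le> norm (X n (nat \<lfloor>N n * t\<rfloor>) - u (s n)) + norm (u (s n) - u t)"
          by (rule norm_diff_triangle_le[OF order_refl order_refl])
        also have "norm (X n (nat \<lfloor>N n * t\<rfloor>) - u (s n)) \<le> 1 / N n"
          using X[of n "nat \<lfloor>N n * t\<rfloor>"] unfolding s_def by (simp add: dist_norm)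
        finally show "norm (X n (nat \<lfloor>N n * t\<rfloor>) - u t) \<le> 1 / N n + norm (u (s n) - u t)" by simp
      qed
      have "(\<lambda>n. norm (u (s n) - u t)) \<longlonglongrightarrow> 0" using us LIM_zero tendsto_norm_zero by blast
      then show "(\<lambda>n. 1 / N n + norm (u (s n) - u t)) \<longlonglongrightarrow> 0" using tendsto_add[OF iN] by fastforce
    qed
    have eq: "an n t = inner (X n (nat \<lfloor>N n * t\<rfloor>)) (A (u t))" for n
    proof -
      have "an n t = inner (A (X n (nat \<lfloor>N n * t\<rfloor>))) (u t)" unfolding an_def by (simp add: inner_commute)
      also have "\<dots> = inner (X n (nat \<lfloor>N n * t\<rfloor>)) (A (u t))" using sym X uD[OF t'] by blast
      finally show ?thesis .
    qed
    have "(\<lambda>n. inner (X n (nat \<lfloor>N n * t\<rfloor>)) (A (u t))) \<longlonglongrightarrow> inner (u t) (A (u t))"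
      by (intro tendsto_intros Xt)
    then show ?thesis unfolding eq by (simp add: inner_commute)
  qed
  show ?thesis
  proof (rule measurable_on_limit[where N="{0,T}"])
    show "an n measurable_on {0..T}" for n by (rule meas)
    show "negligible {0,T}" by auto
    fix x assume "x \<in> {0..T} - {0,T}"
    then show "(\<lambda>n. an n x) \<longlonglongrightarrow> inner (A (u x)) (u x)" by (rule conv)
  qed
qed

lemma caputo_inner:
  fixes u :: "real \<Rightarrow> 'a::real_inner" and u' :: "real \<Rightarrow> 'a"
  assumes int: "(\<lambda>\<tau>. (t-\<tau>) powr (-b) *\<^sub>R u' \<tau>) integrable_on {0..t}"
  shows "inner (integral {0..t} (\<lambda>\<tau>. (t-\<tau>) powr (-b) *\<^sub>R u' \<tau>)) e =
           integral {0..t} (\<lambda>\<tau>. (t-\<tau>) powr (-b) * inner (u' \<tau>) e)"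
    and "(\<lambda>\<tau>. (t-\<tau>) powr (-b) * inner (u' \<tau>) e) integrable_on {0..t}"
proof -
  have bl: "bounded_linear (\<lambda>x. inner x e)" by (rule bounded_linear_inner_left)
  have eq: "(\<lambda>x. inner x e) \<circ> (\<lambda>\<tau>. (t-\<tau>) powr (-b) *\<^sub>R u' \<tau>) = (\<lambda>\<tau>. (t-\<tau>) powr (-b) * inner (u' \<tau>) e)"
    by (auto simp: fun_eq_iff)
  show "inner (integral {0..t} (\<lambda>\<tau>. (t-\<tau>) powr (-b) *\<^sub>R u' \<tau>)) e =
           integral {0..t} (\<lambda>\<tau>. (t-\<tau>) powr (-b) * inner (u' \<tau>) e)"
    using integral_linear[OF int bl] unfolding eq by simp
  show "(\<lambda>\<tau>. (t-\<tau>) powr (-b) * inner (u' \<tau>) e) integrable_on {0..t}"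
    using integrable_linear[OF int bl] unfolding eq .
qed

lemma inner_const_deriv:
  fixes u :: "real \<Rightarrow> 'a::real_inner"
  assumes "(u has_vector_derivative v) (at t)"
  shows "((\<lambda>\<tau>. inner (u \<tau>) e) has_real_derivative inner v e) (at t)"
  using inner_deriv[OF assms, of "\<lambda>_. e" 0] by simp

lemma meas_m:
  fixes u :: "real \<Rightarrow> 'a::real_inner" and u' :: "real \<Rightarrow> 'a"
  assumes b: "0 < b" "b < 1" and T: "0 < T" and cu: "continuous_on {0..T} u"
    and der: "\<And>t. t \<in> {0<..<T} \<Longrightarrow> (u has_vector_derivative u' t) (at t)"
    and int: "\<And>t. t \<in> {0<..<T} \<Longrightarrow> (\<lambda>\<tau>. (t-\<tau>) powr (-b) *\<^sub>R u' \<tau>) integrable_on {0..t}"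
  shows "(\<lambda>t. inner (integral {0..t} (\<lambda>\<tau>. (t-\<tau>) powr (-b) *\<^sub>R u' \<tau>)) (u t)) measurable_on {0..T}"
proof -
  define ub where "ub = (\<lambda>\<tau>. u (max 0 (min T \<tau>)))"
  have ubc: "continuous_on UNIV ub" unfolding ub_def
    by (rule continuous_on_compose2[OF cu]) (use T in \<open>auto intro!: continuous_intros\<close>)
  have ubeq: "ub \<tau> = u \<tau>" if "\<tau> \<in> {0..T}" for \<tau> using that unfolding ub_def by auto
  define N where "N = (\<lambda>n::nat. real (Suc n))"
  have N: "N n > 0" "1 / N n \<le> 1" "0 \<le> 1 / N n" for n unfolding N_def by auto
  define Bf where "Bf = (\<lambda>x t. integral {0..x} (\<lambda>\<tau>. (x-\<tau>) powr (-b) * inner (ub \<tau>) (u t)))"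
  define g where "g = (\<lambda>n t. N n * (Bf (t + 1 / N n) t - Bf (t + 0) t) - t powr (-b) * inner (u 0) (u t))"
  have gm: "g n measurable_on {0..T}" for n
  proof -
    have c1: "continuous_on {0..T} (\<lambda>t. Bf (t + e) t)" if "0 \<le> e" "e \<le> 1" for e
      unfolding Bf_def
      by (rule B_cont[OF b continuous_on_subset[OF ubc] cu, of "T+1"]) (use that in auto)
    have "continuous_on {0<..<T} (g n)" unfolding g_def
      by (intro continuous_intros continuous_on_subset[OF c1] continuous_on_subset[OF cu]) (use N(2,3) in auto)
    then have "g n \<in> borel_measurable (lebesgue_on {0..T})" by (rule meas_open)
    then show ?thesis by (subst measurable_on_iff_borel_measurable) auto
  qed
  have conv: "(\<lambda>n. g n t) \<longlonglongrightarrow> inner (integral {0..t} (\<lambda>\<tau>. (t-\<tau>) powr (-b) *\<^sub>R u' \<tau>)) (u t)"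
    if t: "t \<in> {0..T} - {0,T}" for t
  proof -
    have t': "0 < t" "t < T" using t by auto
    define \<zeta> where "\<zeta> = (\<lambda>\<tau>. inner (u \<tau>) (u t))"
    define \<zeta>b where "\<zeta>b = (\<lambda>\<tau>. inner (ub \<tau>) (u t))"
    have dz: "(\<zeta> has_real_derivative inner (u' \<tau>) (u t)) (at \<tau>)" if "\<tau> \<in> {0<..<T}" for \<tau>
      unfolding \<zeta>_def by (rule inner_const_deriv[OF der[OF that]])
    have "(\<zeta>b has_real_derivative inner (u' t) (u t)) (at t)"
    proof (subst DERIV_cong_ev[OF refl _ refl])
      show "\<forall>\<^sub>F x in nhds t. \<zeta>b x = \<zeta> x"
        using eventually_nhds_in_open[of "{0<..<T}" t] t' unfolding \<zeta>b_def \<zeta>_def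
        by (auto elim!: eventually_mono simp: ubeq)
      show "(\<zeta> has_real_derivative inner (u' t) (u t)) (at t)" using dz t' by auto
    qed
    moreover have "continuous_on {0..T + 1} \<zeta>b" unfolding \<zeta>b_def
      by (intro continuous_intros continuous_on_subset[OF ubc]) auto
    ultimately have dJ: "((\<lambda>x. Bf x t) has_real_derivative
          t powr (-b) * \<zeta>b t + integral {0..t} (\<lambda>\<tau>. b * (t-\<tau>) powr (-b-1) * (\<zeta>b t - \<zeta>b \<tau>))) (at t)"
      using rl_deriv[OF b, of t "T+1" \<zeta>b] t' unfolding Bf_def \<zeta>b_def by auto
    have cz: "continuous_on {0..t} \<zeta>" unfolding \<zeta>_def
      by (intro continuous_intros continuous_on_subset[OF cu]) (use t' in auto)
    have L2: "integral {0..t} (\<lambda>\<tau>. (t-\<tau>) powr (-b) * inner (u' \<tau>) (u t)) =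
           t powr (-b) * (\<zeta> t - \<zeta> 0) + integral {0..t} (\<lambda>\<tau>. b * (t-\<tau>) powr (-b-1) * (\<zeta> t - \<zeta> \<tau>))"
      by (rule caputo_marchaud(1)[OF b t'(1) cz])
         (use dz t' caputo_inner(2)[OF int, of t "u t"] in auto)
    have same: "integral {0..t} (\<lambda>\<tau>. b * (t-\<tau>) powr (-b-1) * (\<zeta>b t - \<zeta>b \<tau>)) =
                integral {0..t} (\<lambda>\<tau>. b * (t-\<tau>) powr (-b-1) * (\<zeta> t - \<zeta> \<tau>))"
      by (rule integral_cong) (use t' in \<open>auto simp: \<zeta>b_def \<zeta>_def ubeq\<close>)
    have zbt: "\<zeta>b t = \<zeta> t" unfolding \<zeta>b_def \<zeta>_def using t' by (simp add: ubeq)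
    have target: "inner (integral {0..t} (\<lambda>\<tau>. (t-\<tau>) powr (-b) *\<^sub>R u' \<tau>)) (u t) =
        (t powr (-b) * \<zeta>b t + integral {0..t} (\<lambda>\<tau>. b * (t-\<tau>) powr (-b-1) * (\<zeta>b t - \<zeta>b \<tau>)))
          - t powr (-b) * inner (u 0) (u t)"
    proof -
      have intt: "(\<lambda>\<tau>. (t-\<tau>) powr (-b) *\<^sub>R u' \<tau>) integrable_on {0..t}" using int t' by auto
      have "inner (integral {0..t} (\<lambda>\<tau>. (t-\<tau>) powr (-b) *\<^sub>R u' \<tau>)) (u t) =
            integral {0..t} (\<lambda>\<tau>. (t-\<tau>) powr (-b) * inner (u' \<tau>) (u t))"
        by (rule caputo_inner(1)[OF intt])
      also have "\<dots> = t powr (-b) * (\<zeta> t - \<zeta> 0) + integral {0..t} (\<lambda>\<tau>. b * (t-\<tau>) powr (-b-1) * (\<zeta> t - \<zeta> \<tau>))"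
        by (rule L2)
      also have "\<dots> = (t powr (-b) * \<zeta>b t + integral {0..t} (\<lambda>\<tau>. b * (t-\<tau>) powr (-b-1) * (\<zeta>b t - \<zeta>b \<tau>)))
          - t powr (-b) * inner (u 0) (u t)"
        unfolding same unfolding zbt by (simp add: \<zeta>_def algebra_simps)
      finally show ?thesis .
    qed
    have dq: "((\<lambda>h. (Bf (t + h) t - Bf t t) / h) \<longlongrightarrow>
          t powr (-b) * \<zeta>b t + integral {0..t} (\<lambda>\<tau>. b * (t-\<tau>) powr (-b-1) * (\<zeta>b t - \<zeta>b \<tau>))) (at 0)"
      using dJ by (simp add: DERIV_def)
    have hN: "filterlim (\<lambda>n. 1 / N n) (at 0) sequentially"
    proof (rule filterlim_atI)
      show "(\<lambda>n. 1 / N n) \<longlonglongrightarrow> 0" unfolding N_def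
        using LIMSEQ_inverse_real_of_nat by (simp add: inverse_eq_divide)
      show "\<forall>\<^sub>F n in sequentially. 1 / N n \<noteq> 0"
      proof (rule always_eventually, rule allI)
        fix n show "1 / N n \<noteq> 0" using N(1)[of n] by simp
      qed
    qed
    have "(\<lambda>n. (Bf (t + 1 / N n) t - Bf t t) / (1 / N n)) \<longlonglongrightarrow>
          t powr (-b) * \<zeta>b t + integral {0..t} (\<lambda>\<tau>. b * (t-\<tau>) powr (-b-1) * (\<zeta>b t - \<zeta>b \<tau>))"
      using filterlim_compose[OF dq hN] by simp
    then have "(\<lambda>n. (Bf (t + 1 / N n) t - Bf t t) / (1 / N n) - t powr (-b) * inner (u 0) (u t)) \<longlonglongrightarrow>
          inner (integral {0..t} (\<lambda>\<tau>. (t-\<tau>) powr (-b) *\<^sub>R u' \<tau>)) (u t)"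
      unfolding target by (intro tendsto_intros)
    moreover have "(Bf (t + 1 / N n) t - Bf t t) / (1 / N n) - t powr (-b) * inner (u 0) (u t) = g n t" for n
      unfolding g_def using N[of n] by simp
    ultimately show ?thesis by simp
  qed
  show ?thesis
  proof (rule measurable_on_spike[OF measurable_on_limit[where N="{0,T}" and f=g], where S="{0,T}"])
    show "g n measurable_on {0..T}" for n by (rule gm)
    show "negligible {0,T}" by auto
    fix x assume "x \<in> {0..T} - {0,T}"
    then show "(\<lambda>n. g n x) \<longlonglongrightarrow> inner (integral {0..x} (\<lambda>\<tau>. (x-\<tau>) powr (-b) *\<^sub>R u' \<tau>)) (u x)"
      by (rule conv)
  qed auto
qed

lemma kint0:
  fixes g :: "real \<Rightarrow> real"
  assumes b: "0 < b" "b < 1" and g: "continuous_on {0..T} g" and True: "0 \<le> T"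
  shows "(\<lambda>t. t powr (-b) * g t) integrable_on {0..T}"
proof -
  obtain M where M: "M \<ge> 0" "\<And>y. y \<in> {0..T} \<Longrightarrow> norm (g y) \<le> M"
    using cont_bound[OF g] by metis
  show ?thesis
  proof (rule measurable_bounded_by_integrable_imp_integrable)
    show "(\<lambda>t. t powr (-b) * g t) \<in> borel_measurable (lebesgue_on {0..T})"
      by (rule meas_open) (intro continuous_intros continuous_on_subset[OF g], auto)
    show "(\<lambda>t. M * t powr (-b)) integrable_on {0..T}"
      using integrable_on_powr_from_0[of "-b" T] b True by (intro integrable_on_mult_right) auto
    fix t assume "t \<in> {0..T}"
    then show "norm (t powr (-b) * g t) \<le> M * t powr (-b)"
      using M(2)[of t] by (simp add: abs_mult mult.commute mult_right_mono)
  qed auto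
qed

theorem theorem4p2:
  fixes A :: "'a::{real_inner, complete_space} \<Rightarrow> 'a"
    and DA :: "'a set"
    and f u :: "real \<Rightarrow> 'a"
    and u0 :: 'a
    and \<beta> T :: real
  assumes "dense_linear_operator A DA"
    and "selfadjoint_op A DA"
    and "positive_definite_op A DA"
    and "0 < \<beta>" and "\<beta> < 1" and "0 < T"
    and "\<exists>\<sigma>>0. \<exists>C. \<forall>t\<ge>0. exp (- \<sigma> * t) * norm (f t) \<le> C"
    and "is_solution \<beta> A DA f u0 T u"
  shows "\<exists>I1 I2 I3 I4.
     ((\<lambda>t. g_weight \<beta> T t * (norm (u t))\<^sup>2) has_integral I1) {0..T} \<and>
     ((\<lambda>t. inner (A (u t)) (u t)) has_integral I2) {0..T} \<and>
     ((\<lambda>t. inner (f t) (u t)) has_integral I3) {0..T} \<and>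
     ((\<lambda>t. t powr (- \<beta>) * inner u0 (u t)) has_integral I4) {0..T} \<and>
     I1 / 2 + I2 \<le> I3 + I4 / Gamma (1 - \<beta>)"
proof -
  have b: "0 < \<beta>" "\<beta> < 1" using assms(4,5) .
  have T: "0 < T" using assms(6) .
  have dense: "closure DA = UNIV" and subDA: "subspace DA"
    and scal: "\<forall>c. \<forall>x\<in>DA. A (c *\<^sub>R x) = c *\<^sub>R A x"
    using assms(1) unfolding dense_linear_operator_def by auto
  have sym: "\<forall>x\<in>DA. \<forall>y\<in>DA. inner (A x) y = inner x (A y)"
    using assms(2) unfolding selfadjoint_op_def by blast
  have pos: "\<And>v. v \<in> DA \<Longrightarrow> v \<noteq> 0 \<Longrightarrow> inner (A v) v > 0"
    using assms(3) unfolding positive_definite_op_def by blast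
  have cu: "continuous_on {0..T} u" and u00: "u 0 = u0"
    and sol: "\<And>t. t \<in> {0<..<T} \<Longrightarrow> u differentiable (at t) \<and>
        (\<lambda>\<tau>. (t - \<tau>) powr (- \<beta>) *\<^sub>R vector_derivative u (at \<tau>)) integrable_on {0..t} \<and>
        u t \<in> DA \<and> caputo_deriv \<beta> u t + A (u t) = f t"
    using assms(8) unfolding is_solution_def by blast+
  define u' where "u' = (\<lambda>t. vector_derivative u (at t))"
  have der: "(u has_vector_derivative u' t) (at t)" if "t \<in> {0<..<T}" for t
    using sol[OF that] unfolding u'_def by (simp add: vector_derivative_works[symmetric])
  have int: "(\<lambda>\<tau>. (t-\<tau>) powr (-\<beta>) *\<^sub>R u' \<tau>) integrable_on {0..t}" if "t \<in> {0<..<T}" for t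
    using sol[OF that] unfolding u'_def by simp
  have uD: "u t \<in> DA" if "t \<in> {0<..<T}" for t using sol[OF that] by simp
  define c where "c = 1 / Gamma (1 - \<beta>)"
  have c: "c > 0" unfolding c_def using b by simp
  define mfun where "mfun = (\<lambda>t. inner (integral {0..t} (\<lambda>\<tau>. (t-\<tau>) powr (-\<beta>) *\<^sub>R u' \<tau>)) (u t))"
  define a where "a = (\<lambda>t. inner (A (u t)) (u t))"
  define fu where "fu = (\<lambda>t. inner (f t) (u t))"
  define \<phi> where "\<phi> = (\<lambda>t. inner (u t) (u t))"
  define \<psi> where "\<psi> = (\<lambda>t. inner u0 (u t))"
  have fueq: "fu t = c * mfun t + a t" if "t \<in> {0<..<T}" for t
  proof -
    have "f t = c *\<^sub>R integral {0..t} (\<lambda>\<tau>. (t-\<tau>) powr (-\<beta>) *\<^sub>R u' \<tau>) + A (u t)"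
      using sol[OF that] unfolding caputo_deriv_def u'_def c_def by simp
    then show ?thesis unfolding fu_def mfun_def a_def by (simp add: inner_add_left)
  qed
  have a0: "a t \<ge> 0" if "t \<in> {0<..<T}" for t
  proof (cases "u t = 0")
    case True
    have "0 \<in> DA" using subDA by (rule subspace_0)
    then have "A 0 = 0" using scal by (metis scaleR_zero_left)
    then show ?thesis unfolding a_def True by simp
  next
    case False
    then show ?thesis using pos[OF uD[OF that]] unfolding a_def by simp
  qed
  have ma: "a measurable_on {0..T}" unfolding a_def by (rule meas_A[OF dense sym cu uD])
  have mm: "mfun measurable_on {0..T}" unfolding mfun_def by (rule meas_m[OF b T cu der int])
  have mfu: "fu measurable_on {0..T}"
  proof (rule measurable_on_spike[where S="{0,T}"])
    show "(\<lambda>t. c * mfun t + a t) measurable_on {0..T}"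
      by (intro measurable_on_add measurable_on_cmul mm ma)
  qed (use fueq in auto)
  obtain \<sigma> C0 where \<sigma>: "\<sigma> > 0" and C0: "\<And>t. t \<ge> 0 \<Longrightarrow> exp (- \<sigma> * t) * norm (f t) \<le> C0"
    using assms(7) by auto
  obtain Mu where Mu: "Mu \<ge> 0" "\<And>y. y \<in> {0..T} \<Longrightarrow> norm (u y) \<le> Mu"
    using cont_bound[OF cu] by metis
  have fb: "norm (f t) \<le> C0 * exp (\<sigma> * T)" if "t \<in> {0..T}" for t
  proof -
    have "exp (\<sigma> * t) * exp (- \<sigma> * t) = 1" by (simp add: exp_add[symmetric])
    then have "norm (f t) = exp (\<sigma> * t) * (exp (- \<sigma> * t) * norm (f t))" by (simp add: mult.assoc[symmetric])
    also have "\<dots> \<le> exp (\<sigma> * t) * C0" using C0[of t] that by (intro mult_left_mono) auto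
    also have "\<dots> \<le> exp (\<sigma> * T) * C0"
    proof (rule mult_right_mono)
      show "exp (\<sigma> * t) \<le> exp (\<sigma> * T)" using that \<sigma> by (auto intro: mult_left_mono)
      have "0 \<le> exp (- \<sigma> * 0) * norm (f 0)" by simp
      then show "0 \<le> C0" using C0[of 0] by linarith
    qed
    finally show ?thesis by (simp add: mult.commute)
  qed
  have fuint: "fu integrable_on {0..T}"
  proof (rule measurable_bounded_by_integrable_imp_integrable)
    show "fu \<in> borel_measurable (lebesgue_on {0..T})"
      using mfu by (subst (asm) measurable_on_iff_borel_measurable) auto
    show "(\<lambda>t. C0 * exp (\<sigma> * T) * Mu) integrable_on {0..T}" by (rule Henstock_Kurzweil_Integration.integrable_const_ivl)
    fix t assume t: "t \<in> {0..T}"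
    have "norm (fu t) \<le> norm (f t) * norm (u t)" unfolding fu_def by (simp add: Cauchy_Schwarz_ineq2)
    also have "\<dots> \<le> C0 * exp (\<sigma> * T) * Mu"
    proof -
      have "0 \<le> C0 * exp (\<sigma> * T)" using fb[OF t] norm_ge_zero[of "f t"] by linarith
      then show ?thesis using fb[OF t] Mu(2)[OF t] by (intro mult_mono) auto
    qed
    finally show "norm (fu t) \<le> C0 * exp (\<sigma> * T) * Mu" .
  qed auto
  have cphi: "continuous_on {0..T} \<phi>" "continuous_on {0..T} \<psi>"
    unfolding \<phi>_def \<psi>_def by (intro continuous_intros cu)+
  have dphi: "(\<phi> has_real_derivative (inner (u' t) (u t) + inner (u t) (u' t))) (at t)"
    if "t \<in> {0<..<T}" for t
    unfolding \<phi>_def by (rule inner_deriv[OF der[OF that] der[OF that]])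
  define J\<phi> where "J\<phi> = (\<lambda>x. integral {0..x} (\<lambda>\<tau>. (x-\<tau>) powr (-\<beta>) * \<phi> \<tau>))"
  define P\<phi> where "P\<phi> = (\<lambda>t. integral {0..t} (\<lambda>\<tau>. \<beta> * (t-\<tau>) powr (-\<beta>-1) * (\<phi> t - \<phi> \<tau>)))"
  define Jd where "Jd = (\<lambda>t. t powr (-\<beta>) * \<phi> t + P\<phi> t)"
  have ftc: "(Jd has_integral (J\<phi> T - J\<phi> 0)) {0..T}"
  proof (rule fundamental_theorem_of_calculus_interior)
    show "0 \<le> T" using T by simp
    show "continuous_on {0..T} J\<phi>" unfolding J\<phi>_def by (rule J_cont[OF b cphi(1)])
    fix x assume x: "x \<in> {0<..<T}"
    have "(J\<phi> has_real_derivative Jd x) (at x)"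
      unfolding J\<phi>_def Jd_def P\<phi>_def
      by (rule rl_deriv[OF b _ _ cphi(1) dphi[OF x]]) (use x in auto)
    then show "(J\<phi> has_vector_derivative Jd x) (at x)"
      by (simp add: has_real_derivative_iff_has_vector_derivative)
  qed
  have J0: "J\<phi> 0 = 0" unfolding J\<phi>_def by simp
  have kphi: "(\<lambda>t. t powr (-\<beta>) * \<phi> t) integrable_on {0..T}" by (rule kint0[OF b cphi(1)]) (use T in auto)
  have kpsi: "(\<lambda>t. t powr (-\<beta>) * \<psi> t) integrable_on {0..T}" by (rule kint0[OF b cphi(2)]) (use T in auto)
  have JTint: "(\<lambda>\<tau>. (T-\<tau>) powr (-\<beta>) * \<phi> \<tau>) integrable_on {0..T}"
    by (rule kint_cont[OF b cphi(1)]) (use T in auto)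
  define K\<phi> where "K\<phi> = integral {0..T} (\<lambda>t. t powr (-\<beta>) * \<phi> t)"
  define K\<psi> where "K\<psi> = integral {0..T} (\<lambda>t. t powr (-\<beta>) * \<psi> t)"
  define lw where "lw = (\<lambda>t. c * ((1/2) * (t powr (-\<beta>) * \<phi> t) - t powr (-\<beta>) * \<psi> t + (1/2) * Jd t))"
  have lint: "(lw has_integral c * ((1/2) * K\<phi> - K\<psi> + (1/2) * J\<phi> T)) {0..T}"
    unfolding lw_def K\<phi>_def K\<psi>_def
    by (intro has_integral_mult_right has_integral_add has_integral_diff integrable_integral kphi kpsi)
       (use ftc J0 in simp)
  have ml: "lw t \<le> c * mfun t" if tT: "t \<in> {0<..<T}" for t
  proof -
    have t': "0 < t" "t < T" using tT by auto
    define \<zeta> where "\<zeta> = (\<lambda>\<tau>. inner (u \<tau>) (u t))"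
    have cz: "continuous_on {0..t} \<zeta>" unfolding \<zeta>_def
      by (intro continuous_intros continuous_on_subset[OF cu]) (use t' in auto)
    have dz: "(\<zeta> has_real_derivative inner (u' \<tau>) (u t)) (at \<tau>)" if "\<tau> \<in> {0<..t}" for \<tau>
      unfolding \<zeta>_def by (rule inner_const_deriv[OF der]) (use that t' in auto)
    have m1: "mfun t = integral {0..t} (\<lambda>\<tau>. (t-\<tau>) powr (-\<beta>) * inner (u' \<tau>) (u t))"
      unfolding mfun_def by (rule caputo_inner(1)[OF int[OF tT]])
    have intz: "(\<lambda>\<tau>. (t-\<tau>) powr (-\<beta>) * inner (u' \<tau>) (u t)) integrable_on {0..t}"
      by (rule caputo_inner(2)[OF int[OF tT]])
    note L2 = caputo_marchaud[OF b t'(1) cz dz intz]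
    define R where "R = integral {0..t} (\<lambda>\<tau>. \<beta> * (t-\<tau>) powr (-\<beta>-1) * (\<zeta> t - \<zeta> \<tau>))"
    have m2: "mfun t = t powr (-\<beta>) * (\<phi> t - \<psi> t) + R"
      using m1 L2(1) u00 unfolding R_def by (simp add: \<zeta>_def \<phi>_def \<psi>_def)
    obtain C where C: "C \<ge> 0" "\<And>\<tau>. \<tau> \<in> {0..t} \<Longrightarrow> \<bar>\<phi> \<tau> - \<phi> t\<bar> \<le> C * \<bar>\<tau> - t\<bar>"
      using lip_at[OF continuous_on_subset[OF cphi(1)] _ dphi[OF tT], of 0 t] t' by auto
    have Pint: "(\<lambda>\<tau>. \<beta> * (t-\<tau>) powr (-\<beta>-1) * (\<phi> t - \<phi> \<tau>)) integrable_on {0..t}"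
      by (rule march_int(1)[OF b _ continuous_on_subset[OF cphi(1)] C]) (use t' in auto)
    have "(1/2) * P\<phi> t = integral {0..t} (\<lambda>\<tau>. (1/2) * (\<beta> * (t-\<tau>) powr (-\<beta>-1) * (\<phi> t - \<phi> \<tau>)))"
      unfolding P\<phi>_def by simp
    also have "\<dots> \<le> R" unfolding R_def
    proof (rule Henstock_Kurzweil_Integration.integral_le)
      show "(\<lambda>\<tau>. (1/2) * (\<beta> * (t-\<tau>) powr (-\<beta>-1) * (\<phi> t - \<phi> \<tau>))) integrable_on {0..t}"
        by (rule integrable_on_mult_right[OF Pint])
      show "(\<lambda>\<tau>. \<beta> * (t-\<tau>) powr (-\<beta>-1) * (\<zeta> t - \<zeta> \<tau>)) integrable_on {0..t}" by (rule L2(2))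
      fix \<tau> assume "\<tau> \<in> {0..t}"
      have sq: "0 \<le> inner (u t - u \<tau>) (u t - u \<tau>)" by simp
      then have "(1/2) * (\<phi> t - \<phi> \<tau>) \<le> \<zeta> t - \<zeta> \<tau>"
        unfolding \<phi>_def \<zeta>_def by (simp add: inner_diff_left inner_diff_right inner_commute)
      moreover have "0 \<le> \<beta> * (t-\<tau>) powr (-\<beta>-1)" using b by simp
      ultimately show "(1/2) * (\<beta> * (t-\<tau>) powr (-\<beta>-1) * (\<phi> t - \<phi> \<tau>)) \<le> \<beta> * (t-\<tau>) powr (-\<beta>-1) * (\<zeta> t - \<zeta> \<tau>)"
        using mult_left_mono[of "(1/2) * (\<phi> t - \<phi> \<tau>)" "\<zeta> t - \<zeta> \<tau>" "\<beta> * (t-\<tau>) powr (-\<beta>-1)"]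
        by (simp only: mult.assoc mult.left_commute[of "1/2"])
    qed
    finally have RP: "(1/2) * P\<phi> t \<le> R" .
    have "lw t = c * (t powr (-\<beta>) * (\<phi> t - \<psi> t) + (1/2) * P\<phi> t)"
      unfolding lw_def Jd_def by (simp add: algebra_simps)
    also have "\<dots> \<le> c * mfun t" unfolding m2 using RP c by (intro mult_left_mono) auto
    finally show ?thesis .
  qed
  have ale: "a t \<le> fu t - lw t" if "t \<in> {0<..<T}" for t
    using fueq[OF that] ml[OF that] by simp
  define a' where "a' = (\<lambda>t. if t \<in> {0<..<T} then a t else 0)"
  define g' where "g' = (\<lambda>t. if t \<in> {0<..<T} then fu t - lw t else 0)"
  have negl: "negligible {0,T}" by auto
  have fl: "(\<lambda>t. fu t - lw t) integrable_on {0..T}"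
    using integrable_diff[OF fuint] lint by (auto simp: integrable_on_def)
  have g'int: "g' integrable_on {0..T}"
    by (rule integrable_spike[OF fl negl]) (auto simp: g'_def)
  have a'm: "a' measurable_on {0..T}"
    by (rule measurable_on_spike[OF ma negl]) (auto simp: a'_def)
  have a'int: "a' integrable_on {0..T}"
  proof (rule measurable_bounded_by_integrable_imp_integrable[OF _ g'int])
    show "a' \<in> borel_measurable (lebesgue_on {0..T})"
      using a'm by (subst (asm) measurable_on_iff_borel_measurable) auto
    fix t assume "t \<in> {0..T}"
    show "norm (a' t) \<le> g' t"
    proof (cases "t \<in> {0<..<T}")
      case True
      have "a t = fu t - c * mfun t" using fueq[OF True] by simp
      then show ?thesis using a0[OF True] ml[OF True] unfolding a'_def g'_def using True by auto
    qed (auto simp: a'_def g'_def)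
  qed auto
  have aint: "a integrable_on {0..T}"
    by (rule integrable_spike[OF a'int negl]) (auto simp: a'_def)
  have "integral {0..T} a = integral {0..T} a'"
    by (rule integral_spike[OF negl]) (auto simp: a'_def)
  also have "\<dots> \<le> integral {0..T} g'"
    by (rule Henstock_Kurzweil_Integration.integral_le[OF a'int g'int])
       (auto simp: a'_def g'_def intro: ale)
  also have "\<dots> = integral {0..T} (\<lambda>t. fu t - lw t)"
    by (rule integral_spike[OF negl]) (auto simp: g'_def)
  also have "\<dots> = integral {0..T} fu - c * ((1/2) * K\<phi> - K\<psi> + (1/2) * J\<phi> T)"
  proof -
    have li: "lw integrable_on {0..T}" using lint by (auto simp: integrable_on_def)
    show ?thesis using integral_diff[OF fuint li] integral_unique[OF lint] by simp
  qed
  finally have main: "integral {0..T} a \<le> integral {0..T} fu - c * ((1/2) * K\<phi> - K\<psi> + (1/2) * J\<phi> T)" .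
  define I1 where "I1 = c * (J\<phi> T + K\<phi>)"
  have I1: "((\<lambda>t. g_weight \<beta> T t * (norm (u t))\<^sup>2) has_integral I1) {0..T}"
  proof -
    have "((\<lambda>t. c * ((T-t) powr (-\<beta>) * \<phi> t) + c * (t powr (-\<beta>) * \<phi> t)) has_integral
            c * J\<phi> T + c * K\<phi>) {0..T}"
      unfolding J\<phi>_def K\<phi>_def
      by (intro has_integral_add has_integral_mult_right integrable_integral JTint kphi)
    moreover have "(\<lambda>t. c * ((T-t) powr (-\<beta>) * \<phi> t) + c * (t powr (-\<beta>) * \<phi> t)) =
                   (\<lambda>t. g_weight \<beta> T t * (norm (u t))\<^sup>2)"
      unfolding g_weight_def c_def \<phi>_def by (auto simp: fun_eq_iff power2_norm_eq_inner algebra_simps)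
    ultimately show ?thesis unfolding I1_def by (simp add: algebra_simps)
  qed
  show ?thesis
  proof (intro exI conjI)
    show "((\<lambda>t. g_weight \<beta> T t * (norm (u t))\<^sup>2) has_integral I1) {0..T}" by (rule I1)
    show "((\<lambda>t. inner (A (u t)) (u t)) has_integral integral {0..T} a) {0..T}"
      using aint unfolding a_def by (simp add: integrable_integral)
    show "((\<lambda>t. inner (f t) (u t)) has_integral integral {0..T} fu) {0..T}"
      using fuint unfolding fu_def by (simp add: integrable_integral)
    show "((\<lambda>t. t powr (- \<beta>) * inner u0 (u t)) has_integral K\<psi>) {0..T}"
      using kpsi unfolding K\<psi>_def \<psi>_def by (simp add: integrable_integral)
    have "K\<psi> / Gamma (1 - \<beta>) = c * K\<psi>" unfolding c_def by simp
    then show "I1 / 2 + integral {0..T} a \<le> integral {0..T} fu + K\<psi> / Gamma (1 - \<beta>)"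
      using main unfolding I1_def by (simp add: algebra_simps add_divide_distrib)
  qed
qed

end
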